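(* In $\mathrm{Hom}(\mathcal E(2),\mathcal E(4))$ one has $N_*(E(f)) = F$ and $\partial H_2 = N_*(E(g)) + G$.
   Context: Work over $\mathbb F_2$. For a simplicial set $X$, $N_*(X)$ is the normalized chain complex ($\mathbb F_2$ on simplices modulo degenerate ones, $\partial=\sum_id_i$); $\mathrm{Hom}(C,C')$ is the graded Hom complex with $\partial h=\partial\circ h+h\circ\partial$. Alexander–Whitney: $AW(x\times y)=\sum_{i=0}^nd_{i+1}\cdots d_nx\otimes d_0\cdots d_{i-1}y$. Eilenberg–Zilber: $EZ(x\otimes y)=\sum s_{v_p}\cdots s_{v_1}x\times s_{w_q}\cdots s_{w_1}y$, sum over disjoint $\{v_1<\dots<v_p\},\{w_1<\dots<w_q\}\subseteq\{0,\dots,p+q-1\}$ ($p,q$ the dimensions of $x,y$). Shih homotopy $SHI:N_n(X\times Y)\to N_{n+1}(X\times Y)$: zero for $n=0$, and for $n>0$ $$SHI(x\times y)=\sum s_{v_p+m}\cdots s_{v_1+m}s_{m-1}d_{n-p+1}\cdots d_nx\times s_{w_{q+1}+m}\cdots s_{w_1+m}d_{n-p-q}\cdots d_{n-p-1}y,$$ $m=n-p-q$, sum over disjoint $\{v_1<\dots<v_p\},\{w_1<\dots<w_{q+1}\}\subseteq\{0,\dots,p+q\}$ with $0\le p\le n-1$, $0\le q\le n-p-1$. $E(r)$ is the simplicial set whose $n$-simplices are tuples $(\sigma_0,\dots,\sigma_n)$ in $\Sigma_r$ ($d_i$ deletes, $s_i$ repeats the $i$-th entry); $\circ_E:E(r)\times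 E(s_1)\times\dots\times E(s_r)\to E(s_1+\dots+s_r)$ applies the usual block composition of permutations coordinatewise; $\mathcal E(r)=N_*(E(r))$ with composition $\circ_{\mathcal E}=N_*(\circ_E)\circ EZ^r$ ($EZ^r$ iterated $EZ$). $\tilde x_0=(e)\in\mathcal E(2)_0$. $f,g:\Sigma_2\to\Sigma_4$ are the homomorphisms with $f(12)=(13)(24)$, $g(12)=(12)(34)$, and $E(f),E(g)$ the induced simplicial maps (apply entrywise). $F(\sigma_0,\dots,\sigma_n)=\circ_{\mathcal E}((\sigma_0,\dots,\sigma_n)\otimes\tilde x_0\otimes\tilde x_0)$, $G(\sigma_0,\dots,\sigma_n)=\circ_{\mathcal E}(\tilde x_0\otimes AW(\sigma_0,\dots,\sigma_n)^{\otimes2})$, and $H_2(\sigma_0,\dots,\sigma_n)=N_*(\circ_E)((e,\dots,e)\otimes SHI(\sigma_0,\dots,\sigma_n)^{\otimes2})$, where $AW(\cdot)^{\otimes2}$, $SHI(\cdot)^{\otimes2}$ mean $AW$, $SHI$ applied to the diagonal simplex $(\sigma_0,\dots,\sigma_n)\times(\sigma_0,\dots,\sigma_n)$ of $E(2)\times E(2)$, and in $H_2$ the resulting simplices are paired with the constant simplex $(e,\dots,e)$ of $E(2)$ of the same dimension before applying $\circ_E$. *)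

theory Defs
  imports Main
begin

text \<open>An n-simplex of E(r) is a list of n+1 permutations; a simplex of a product
 X x Y is the list of pairs (zip). A chain over F_2 is a finite set of
 nondegenerate simplices (or of basis pairs of a tensor product); addition is
 symmetric difference.\<close>

definition modsum :: "'i set \<Rightarrow> ('i \<Rightarrow> 'a set) \<Rightarrow> 'a set" where
  "modsum I f = {a. odd (card {i\<in>I. a \<in> f i})}"

definition cadd :: "'a set \<Rightarrow> 'a set \<Rightarrow> 'a set" where
  "cadd A B = (A - B) \<union> (B - A)"

text \<open>F_2-linear extension of a map given on basis elements\<close>
definition lin :: "('a \<Rightarrow> 'b set) \<Rightarrow> 'a set \<Rightarrow> 'b set" where
  "lin \<phi> c = modsum c \<phi>"

definition dface :: "nat \<Rightarrow> 'a list \<Rightarrow> 'a list" where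
  "dface i xs = take i xs @ drop (Suc i) xs"

definition sdeg :: "nat \<Rightarrow> 'a list \<Rightarrow> 'a list" where
  "sdeg i xs = take (Suc i) xs @ drop i xs"

definition nondeg :: "'a list \<Rightarrow> bool" where
  "nondeg xs = (\<forall>i. Suc i < length xs \<longrightarrow> xs ! i \<noteq> xs ! Suc i)"

text \<open>class of a simplex in the normalized chain complex\<close>
definition nrm :: "'a list \<Rightarrow> 'a list set" where
  "nrm x = (if nondeg x then {x} else {})"

text \<open>class of x (x) y in the tensor product of normalized complexes\<close>
definition nrm2 :: "'a list \<Rightarrow> 'b list \<Rightarrow> ('a list \<times> 'b list) set" where
  "nrm2 x y = (if nondeg x \<and> nondeg y then {(x, y)} else {})"

text \<open>d_{a} ... d_{b} x for the index list [a,...,b] (rightmost applied first)\<close>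
definition faces :: "nat list \<Rightarrow> 'a list \<Rightarrow> 'a list" where
  "faces is x = foldr dface is x"

text \<open>s_{v_p + k} ... s_{v_1 + k} x for V = {v_1 < ... < v_p} (s_{v_1+k} applied first)\<close>
definition degs :: "nat \<Rightarrow> nat set \<Rightarrow> 'a list \<Rightarrow> 'a list" where
  "degs k V x = foldl (\<lambda>z v. sdeg (v + k) z) x (sorted_list_of_set V)"

definition bd :: "'a list \<Rightarrow> 'a list set" where
  "bd x = (if length x \<le> 1 then {} else modsum {0..<length x} (\<lambda>i. nrm (dface i x)))"

definition AW :: "('a \<times> 'b) list \<Rightarrow> ('a list \<times> 'b list) set" where
  "AW xs = (let n = length xs - 1 in
     modsum {0..n} (\<lambda>i. nrm2 (faces [i+1..<n+1] (map fst xs)) (faces [0..<i] (map snd xs))))"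

text \<open>Eilenberg--Zilber (shuffle map); x of dimension p receives q degeneracies\<close>
definition EZ :: "'a list \<Rightarrow> 'b list \<Rightarrow> ('a \<times> 'b) list set" where
  "EZ x y = (let p = length x - 1; q = length y - 1 in
     modsum {A. A \<subseteq> {0..<p+q} \<and> card A = q}
       (\<lambda>A. nrm (zip (degs 0 A x) (degs 0 ({0..<p+q} - A) y))))"

definition EZ3 :: "'a list \<Rightarrow> 'b list \<Rightarrow> 'c list \<Rightarrow> (('a \<times> 'b) \<times> 'c) list set" where
  "EZ3 x y z = lin (\<lambda>u. EZ u z) (EZ x y)"

definition SHI :: "('a \<times> 'b) list \<Rightarrow> ('a \<times> 'b) list set" where
  "SHI xs = (let n = length xs - 1; x = map fst xs; y = map snd xs in
     if n = 0 then {} else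
     modsum {(p, q, V). p < n \<and> q < n - p \<and> V \<subseteq> {0..p+q} \<and> card V = p}
       (\<lambda>(p, q, V). let m = n - p - q in
          nrm (zip (degs m V (sdeg (m - 1) (faces [n-p+1..<n+1] x)))
                   (degs m ({0..p+q} - V) (faces [n-p-q..<n-p] y)))))"

text \<open>A permutation of {0,...,r-1} is the list [sigma(0),...,sigma(r-1)].\<close>
type_synonym perm = "nat list"

definition Sym :: "nat \<Rightarrow> perm set" where
  "Sym r = {\<sigma>. distinct \<sigma> \<and> set \<sigma> = {0..<r}}"

definition idp :: "nat \<Rightarrow> perm" where
  "idp r = [0..<r]"

text \<open>block composition sigma(tau_1,...,tau_r) = sigma<s_1,...,s_r> o (tau_1 + ... + tau_r)\<close>
definition block_comp :: "perm \<Rightarrow> perm list \<Rightarrow> perm" where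
  "block_comp \<sigma> \<tau>s = concat (map (\<lambda>i.
      map (\<lambda>t. sum_list (map (\<lambda>l. length (\<tau>s ! l)) (filter (\<lambda>l. \<sigma> ! l < \<sigma> ! i) [0..<length \<sigma>])) + t)
          (\<tau>s ! i)) [0..<length \<sigma>])"

text \<open>circ_E : E(2) x E(2) x E(2) -> E(4), on a vertex\<close>
definition compE :: "(perm \<times> perm) \<times> perm \<Rightarrow> perm" where
  "compE u = (case u of ((a, b), c) \<Rightarrow> block_comp a [b, c])"

text \<open>f(12) = (13)(24), g(12) = (12)(34), written 0-indexed\<close>
definition hom_f :: "perm \<Rightarrow> perm" where
  "hom_f \<sigma> = (if \<sigma> = [1, 0] then [2, 3, 0, 1] else idp 4)"

definition hom_g :: "perm \<Rightarrow> perm" where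
  "hom_g \<sigma> = (if \<sigma> = [1, 0] then [1, 0, 3, 2] else idp 4)"

text \<open>nondegenerate simplices of E(r) (basis of the normalized chains E(r))\<close>
definition NE :: "nat \<Rightarrow> perm list set" where
  "NE r = {x. x \<noteq> [] \<and> nondeg x \<and> set x \<subseteq> Sym r}"

definition x0 :: "perm list" where
  "x0 = [idp 2]"

definition NEf :: "perm list \<Rightarrow> perm list set" where
  "NEf x = nrm (map hom_f x)"

definition NEg :: "perm list \<Rightarrow> perm list set" where
  "NEg x = nrm (map hom_g x)"

definition Fmap :: "perm list \<Rightarrow> perm list set" where
  "Fmap x = lin (\<lambda>u. nrm (map compE u)) (EZ3 x x0 x0)"

definition Gmap :: "perm list \<Rightarrow> perm list set" where
  "Gmap x = lin (\<lambda>(a, b). lin (\<lambda>u. nrm (map compE u)) (EZ3 x0 a b)) (AW (zip x x))"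

definition H2 :: "perm list \<Rightarrow> perm list set" where
  "H2 x = lin (\<lambda>u. nrm (map (\<lambda>(a, b). compE ((idp 2, a), b)) u)) (SHI (zip x x))"

end

theory Submission
  imports Defs
begin


instantiation set :: (type) comm_monoid_add
begin
definition zero_set_def: "0 = ({}::'a set)"
definition plus_set_def: "(A::'a set) + B = cadd A B"
instance
  by standard (auto simp: zero_set_def plus_set_def cadd_def)
end

lemma mem_plus_set: "x \<in> (A::'a set) + B \<longleftrightarrow> (x \<in> A) \<noteq> (x \<in> B)"
  by (auto simp: plus_set_def cadd_def)

lemma cadd_plus: "cadd A B = A + B"
  by (simp add: plus_set_def)

lemma set_zero_empty[simp]: "(0::'a set) = {}"
  by (simp add: zero_set_def)

lemma sum_empty_sets[simp]: "sum (\<lambda>x. {}) A = ({}::'a set)"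
  using sum.neutral_const[of A, where 'a="'a set"] unfolding zero_set_def .

lemma add_set_self[simp]: "(A::'a set) + A = {}"
  by (auto simp: mem_plus_set)

lemma add_set_cancel_left[simp]: "(A::'a set) + (A + B) = B"
  by (auto simp: mem_plus_set)

lemma add_set_empty[simp]: "(A::'a set) + {} = A" "{} + (A::'a set) = A"
  by (auto simp: mem_plus_set)

lemma add_set_eq_iff: "((A::'a set) + B = C) \<longleftrightarrow> (A = C + B)"
  by (auto simp: mem_plus_set set_eq_iff)

lemma finite_plus_set[intro]: "finite A \<Longrightarrow> finite B \<Longrightarrow> finite ((A::'a set) + B)"
  by (simp add: plus_set_def cadd_def)

lemma finite_sum_sets[intro]: "(\<And>i. i \<in> I \<Longrightarrow> finite (f i)) \<Longrightarrow> finite (sum f I)"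
proof (induction I rule: infinite_finite_induct)
  case (infinite A) then show ?case by simp
next
  case empty then show ?case by simp
next
  case (insert x F) then show ?case by auto
qed

lemma modsum_insert:
  assumes "finite I" "i \<notin> I"
  shows "modsum (insert i I) f = f i + modsum I f"
proof -
  have "\<And>a. {j\<in>insert i I. a \<in> f j} = (if a \<in> f i then insert i {j\<in>I. a \<in> f j} else {j\<in>I. a \<in> f j})"
    by auto
  then have "\<And>a. card {j\<in>insert i I. a \<in> f j} = (if a \<in> f i then Suc (card {j\<in>I. a \<in> f j}) else card {j\<in>I. a \<in> f j})"
    using assms by (auto simp: card_insert_if)
  then show ?thesis
    by (auto simp: modsum_def mem_plus_set)
qed

lemma modsum_sum: "finite I \<Longrightarrow> modsum I f = sum f I"
proof (induction I rule: finite_induct)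
  case empty then show ?case by (simp add: modsum_def)
next
  case (insert x F) then show ?case by (simp add: modsum_insert)
qed

lemma lin_sum: "finite c \<Longrightarrow> lin f c = sum f c"
  by (simp add: lin_def modsum_sum)

lemma lin_single[simp]: "lin f {x} = f x"
  by (simp add: lin_sum)

lemma lin_empty[simp]: "lin f {} = {}"
  by (simp add: lin_sum)

lemma lin_add:
  assumes "finite A" "finite B"
  shows "lin f (A + B) = lin f A + lin f B"
proof -
  have e: "A + B = (A - B) \<union> (B - A)" by (auto simp: mem_plus_set)
  have 1: "sum f (A + B) = sum f (A - B) + sum f (B - A)"
    unfolding e by (rule sum.union_disjoint) (use assms in auto)
  have 2: "sum f A = sum f (A - B) + sum f (A \<inter> B)"
  proof -
    have "sum f A = sum f (A - A \<inter> B) + sum f (A \<inter> B)"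
      by (rule sum.subset_diff) (use assms in auto)
    moreover have "A - A \<inter> B = A - B" by blast
    ultimately show ?thesis by simp
  qed
  have 3: "sum f B = sum f (B - A) + sum f (A \<inter> B)"
  proof -
    have "sum f B = sum f (B - A \<inter> B) + sum f (A \<inter> B)"
      by (rule sum.subset_diff) (use assms in auto)
    moreover have "B - A \<inter> B = B - A" by blast
    ultimately show ?thesis by simp
  qed
  show ?thesis using assms
    by (simp add: lin_sum 1 2 3 finite_plus_set) (simp add: add_ac)
qed

lemma lin_sumset:
  assumes "finite I" "\<And>i. i \<in> I \<Longrightarrow> finite (g i)"
  shows "lin f (sum g I) = sum (\<lambda>i. lin f (g i)) I"
  using assms
proof (induction I rule: finite_induct)
  case empty then show ?case by simp
next
  case (insert x F)
  then show ?case by (simp add: lin_add finite_sum_sets)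
qed

lemma lin_comp:
  assumes "finite c" "\<And>x. x \<in> c \<Longrightarrow> finite (\<phi> x)"
  shows "lin \<psi> (lin \<phi> c) = sum (\<lambda>x. lin \<psi> (\<phi> x)) c"
  using assms by (simp add: lin_sum[of c \<phi>] lin_sumset)

lemma image_plus_set: "inj f \<Longrightarrow> f ` ((A::'a set) + B) = f ` A + f ` B"
  by (simp add: plus_set_def cadd_def image_Un image_set_diff)

lemma image_sum_set: "inj f \<Longrightarrow> f ` (sum g I) = sum (\<lambda>i. f ` g i) I"
proof (induction I rule: infinite_finite_induct)
  case (infinite A) then show ?case by simp
next
  case empty then show ?case by simp
next
  case (insert x F) then show ?case by (simp add: image_plus_set)
qed

lemma sum_set_cancel_bij:
  assumes "bij_betw h X Y" "\<And>x. x \<in> X \<Longrightarrow> f (h x) = f x"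
  shows "sum f X + sum f Y = ({}::'a set)"
proof -
  have "sum f Y = sum (f \<circ> h) X" using sum.reindex_bij_betw[OF assms(1), of f] by simp
  also have "\<dots> = sum f X" using assms(2) by (intro sum.cong) auto
  finally show ?thesis by simp
qed


definition P :: "bool \<Rightarrow> perm" where
  "P b = (if b then [1, 0] else [0, 1])"

definition xorp :: "bool \<times> bool \<Rightarrow> bool \<times> bool \<Rightarrow> bool \<times> bool" where
  "xorp u v = (fst u \<noteq> fst v, snd u \<noteq> snd v)"

primrec dec1 :: "bool \<Rightarrow> bool list \<Rightarrow> bool list" where
  "dec1 s [] = [s]"
| "dec1 s (d # ds) = s # dec1 (s \<noteq> d) ds"

primrec decp :: "bool \<times> bool \<Rightarrow> (bool \<times> bool) list \<Rightarrow> (bool \<times> bool) list" where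
  "decp st [] = [st]"
| "decp st (d # ds) = st # decp (xorp st d) ds"

lemma inj_P: "inj P" by (auto simp: inj_def P_def)

lemma xorp_assoc: "xorp (xorp a b) c = xorp a (xorp b c)"
  by (auto simp: xorp_def)
lemma xorp_FF[simp]: "xorp a (False, False) = a"
  by (simp add: xorp_def)
lemma xorp_eq_self[simp]: "(xorp a b = a) \<longleftrightarrow> b = (False, False)"
  by (cases a; cases b) (auto simp: xorp_def)

lemma nondeg_Nil[simp]: "nondeg []" and nondeg_single[simp]: "nondeg [a]"
  by (auto simp: nondeg_def)

lemma nondeg_Cons2[simp]: "nondeg (a # b # xs) \<longleftrightarrow> a \<noteq> b \<and> nondeg (b # xs)"
  unfolding nondeg_def
proof (intro iffI conjI allI impI)
  assume h: "\<forall>i. Suc i < length (a # b # xs) \<longrightarrow> (a # b # xs) ! i \<noteq> (a # b # xs) ! Suc i"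
  show "a \<noteq> b" using h[rule_format, of 0] by simp
  fix i assume "Suc i < length (b # xs)"
  then show "(b # xs) ! i \<noteq> (b # xs) ! Suc i" using h[rule_format, of "Suc i"] by simp
next
  fix i assume h: "a \<noteq> b \<and> (\<forall>i. Suc i < length (b # xs) \<longrightarrow> (b # xs) ! i \<noteq> (b # xs) ! Suc i)"
    and i: "Suc i < length (a # b # xs)"
  show "(a # b # xs) ! i \<noteq> (a # b # xs) ! Suc i"
  proof (cases i)
    case 0 then show ?thesis using h by simp
  next
    case (Suc j) then show ?thesis using h i by auto
  qed
qed

lemma length_decp[simp]: "length (decp st ws) = Suc (length ws)"
  by (induction ws arbitrary: st) auto

lemma length_dec1[simp]: "length (dec1 s ws) = Suc (length ws)"
  by (induction ws arbitrary: s) auto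

lemma decp_ne[simp]: "decp st ws \<noteq> []"
  by (cases ws) auto

lemma decp_ne2[simp]: "[] \<noteq> decp st ws"
  by (cases ws) auto

lemma decp_Cons_shape: "\<exists>r. decp st ws = st # r"
  by (cases ws) auto

lemma nondeg_decp: "nondeg (decp st ws) \<longleftrightarrow> (False, False) \<notin> set ws"
proof (induction ws arbitrary: st)
  case Nil then show ?case by simp
next
  case (Cons w ws)
  obtain r where r: "decp (xorp st w) ws = xorp st w # r" using decp_Cons_shape by blast
  show ?case using Cons[of "xorp st w"] by (simp add: r) (metis xorp_eq_self)
qed

lemma decp_face0: "dface 0 (decp st (w # ws)) = decp (xorp st w) ws"
  by (simp add: dface_def)

lemma decp_face_mid:
  "Suc i < length ws \<Longrightarrow>
   dface (Suc i) (decp st ws) = decp st (take i ws @ xorp (ws ! i) (ws ! Suc i) # drop (Suc (Suc i)) ws)"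
proof (induction ws arbitrary: st i)
  case Nil then show ?case by simp
next
  case (Cons w ws)
  show ?case
  proof (cases i)
    case 0
    then obtain w2 rest where ws: "ws = w2 # rest" using Cons.prems by (cases ws) auto
    show ?thesis using 0 ws by (simp add: dface_def xorp_assoc)
  next
    case (Suc j)
    then have "Suc j < length ws" using Cons.prems by simp
    then show ?thesis using Suc Cons.IH[of j "xorp st w"] by (simp add: dface_def)
  qed
qed

lemma decp_face_last: "ws \<noteq> [] \<Longrightarrow> dface (length ws) (decp st ws) = decp st (butlast ws)"
proof (induction ws arbitrary: st)
  case Nil then show ?case by simp
next
  case (Cons w ws)
  then show ?case by (cases ws) (auto simp: dface_def)
qed

lemma decp_sdeg: "i \<le> length ws \<Longrightarrow> sdeg i (decp st ws) = decp st (take i ws @ (False, False) # drop i ws)"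
proof (induction ws arbitrary: st i)
  case Nil then show ?case by (simp add: sdeg_def)
next
  case (Cons w ws)
  then show ?case by (cases i) (auto simp: sdeg_def)
qed

lemma dec1_sdeg: "i \<le> length ws \<Longrightarrow> sdeg i (dec1 s ws) = dec1 s (take i ws @ False # drop i ws)"
proof (induction ws arbitrary: s i)
  case Nil then show ?case by (simp add: sdeg_def)
next
  case (Cons w ws)
  then show ?case by (cases i) (auto simp: sdeg_def)
qed

lemma zip_dec1: "length a = length b \<Longrightarrow> zip (dec1 s a) (dec1 t b) = decp (s, t) (zip a b)"
proof (induction a arbitrary: b s t)
  case Nil then show ?case by simp
next
  case (Cons x a)
  then obtain y b' where "b = y # b'" by (cases b) auto
  then show ?case using Cons by (simp add: xorp_def)
qed

lemma decp_inj: "decp st ws = decp st' ws' \<Longrightarrow> st = st' \<and> ws = ws'"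
proof (induction ws arbitrary: ws' st st')
  case Nil then show ?case by (cases ws') auto
next
  case (Cons w ws)
  then obtain w' r where ws': "ws' = w' # r" by (cases ws') auto
  then have "st = st'" "decp (xorp st w) ws = decp (xorp st' w') r" using Cons.prems by auto
  then have "xorp st w = xorp st' w'" "ws = r" using Cons.IH by blast+
  then have "w = w'" using \<open>st = st'\<close> by (cases w; cases w'; cases st) (auto simp: xorp_def)
  then show ?case using \<open>st = st'\<close> \<open>ws = r\<close> ws' by simp
qed

lemma dface_map: "dface i (map g xs) = map g (dface i xs)"
  by (simp add: dface_def take_map drop_map)

lemma sdeg_map: "sdeg i (map g xs) = map g (sdeg i xs)"
  by (simp add: sdeg_def take_map drop_map)

lemma faces_map: "faces is (map g xs) = map g (faces is xs)"
  by (induction "is") (auto simp: faces_def dface_map)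

lemma degs_map: "degs k V (map g xs) = map g (degs k V xs)"
proof -
  have "\<And>xs. foldl (\<lambda>z v. sdeg (v + k) z) (map g xs) l = map g (foldl (\<lambda>z v. sdeg (v + k) z) xs l)" for l
    by (induction l) (auto simp: sdeg_map)
  then show ?thesis by (simp add: degs_def)
qed

lemma nondeg_map: "inj g \<Longrightarrow> nondeg (map g xs) \<longleftrightarrow> nondeg xs"
  by (auto simp: nondeg_def inj_eq)

lemma nrm_map: "inj g \<Longrightarrow> nrm (map g xs) = map g ` nrm xs"
  by (simp add: nrm_def nondeg_map)

lemma set01: "{0..<2::nat} = {0, 1}" by auto
lemma Sym2: "\<sigma> \<in> Sym 2 \<Longrightarrow> \<sigma> = P False \<or> \<sigma> = P True"
proof -
  assume h: "\<sigma> \<in> Sym 2"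
  then have d: "distinct \<sigma>" by (simp add: Sym_def)
  have s: "set \<sigma> = {0, 1}" using h unfolding Sym_def using set01 by simp
  have c: "card (set \<sigma>) = 2" unfolding s by simp
  have "length \<sigma> = 2" using distinct_card[OF d] c by simp
  then have ab: "\<sigma> = [\<sigma>!0, \<sigma>!1]"
    by (intro nth_equalityI) (auto simp: less_2_cases_iff)
  have "\<sigma>!0 \<in> set \<sigma>" "\<sigma>!1 \<in> set \<sigma>" using ab by (metis list.set_intros(1), metis list.set_intros(1) list.set_intros(2))
  then have "\<sigma>!0 \<in> {0,1}" "\<sigma>!1 \<in> {0,1}" using s by auto
  moreover have "\<sigma>!0 \<noteq> \<sigma>!1" using d ab by (metis distinct_length_2_or_more)
  ultimately have "(\<sigma>!0 = 0 \<and> \<sigma>!1 = 1) \<or> (\<sigma>!0 = 1 \<and> \<sigma>!1 = 0)" by auto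
  then show ?thesis using ab unfolding P_def by (metis (full_types))
qed

lemma nondeg_bool_dec1: "nondeg (b # bs) \<Longrightarrow> b # bs = dec1 b (replicate (length bs) True)"
proof (induction bs arbitrary: b)
  case Nil then show ?case by simp
next
  case (Cons c bs)
  then have "c = (\<not> b)" "nondeg (c # bs)" by auto
  then show ?case using Cons.IH[of c] by simp
qed

lemma map_P_ex: "\<forall>\<sigma>\<in>set x. \<exists>b. \<sigma> = P b \<Longrightarrow> \<exists>bs. x = map P bs"
proof (induction x)
  case Nil then show ?case by simp
next
  case (Cons a x)
  then obtain bs b where "x = map P bs" "a = P b" by auto
  then have "a # x = map P (b # bs)" by simp
  then show ?case by (rule exI)
qed

lemma NE2_shape:
  assumes "x \<in> NE 2"
  shows "\<exists>s n. x = map P (dec1 s (replicate n True))"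
proof -
  have x: "x \<noteq> []" "nondeg x" "set x \<subseteq> Sym 2" using assms by (auto simp: NE_def)
  have "\<forall>\<sigma>\<in>set x. \<exists>b. \<sigma> = P b"
  proof
    fix \<sigma> assume "\<sigma> \<in> set x"
    then have "\<sigma> \<in> Sym 2" using x(3) by blast
    from Sym2[OF this] show "\<exists>b. \<sigma> = P b" by blast
  qed
  then obtain bs where bs: "x = map P bs" using map_P_ex by blast
  then have nd: "nondeg bs" using x(2) nondeg_map[OF inj_P] by simp
  obtain b bs' where bb: "bs = b # bs'" using x(1) bs by (cases bs) auto
  have "bs = dec1 b (replicate (length bs') True)" using nondeg_bool_dec1[of b bs'] nd bb by simp
  then show ?thesis using bs by blast
qed


lemma sorted_insert_max:
  assumes "finite A" "\<forall>a\<in>A. a < (b::nat)"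
  shows "sorted_list_of_set (insert b A) = sorted_list_of_set A @ [b]"
proof -
  have "b \<notin> A" using assms by auto
  then have "sorted_list_of_set (insert b A) = insort b (sorted_list_of_set A)"
    using assms by (simp add: sorted_list_of_set_insert)
  also have "\<dots> = sorted_list_of_set A @ [b]"
    using assms by (intro sorted_insort_is_snoc) auto
  finally show ?thesis .
qed

lemma degs_dec1_aux:
  assumes "finite V"
  shows "V \<subseteq> {0..<r + card V} \<Longrightarrow> length Pre = k \<Longrightarrow>
    foldl (\<lambda>z v. sdeg (v + k) z) (dec1 s (Pre @ replicate r b)) (sorted_list_of_set V)
    = dec1 s (Pre @ map (\<lambda>i. if i \<in> V then False else b) [0..<r + card V])"
  using assms
proof (induction V rule: finite_linorder_max_induct)
  case empty
  then show ?case by (simp add: map_replicate_trivial)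
next
  case (insert c A)
  have cA: "c \<notin> A" using insert by auto
  have cardI: "card (insert c A) = Suc (card A)" using cA insert by simp
  have sub: "A \<subseteq> {0..<r + card A}"
  proof
    fix a assume a: "a \<in> A"
    have "c < r + Suc (card A)" using insert(4) cardI by auto
    then show "a \<in> {0..<r + card A}" using insert(2) a by force
  qed
  have cle: "c \<le> r + card A" using insert(4) cardI by auto
  define N where "N = r + card A"
  define fA where "fA = (\<lambda>i. if i \<in> A then False else b)"
  define fV where "fV = (\<lambda>i. if i \<in> insert c A then False else b)"
  have IH: "foldl (\<lambda>z v. sdeg (v + k) z) (dec1 s (Pre @ replicate r b)) (sorted_list_of_set A)
     = dec1 s (Pre @ map fA [0..<N])" using insert(3)[OF sub insert(5)] by (simp add: fA_def N_def)
  have split: "[0..<N] = [0..<c] @ [c..<N]" using cle upt_add_eq_append[of 0 c "N - c"] N_def by simp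
  have m1: "map fA [c..<N] = replicate (N - c) b"
  proof -
    have "map fA [c..<N] = map (\<lambda>_. b) [c..<N]"
      by (rule map_cong) (use insert(2) in \<open>auto simp: fA_def\<close>)
    then show ?thesis by (simp add: map_replicate_const)
  qed
  have m2: "map fA [0..<c] = map fV [0..<c]" by (auto simp: fA_def fV_def)
  have split2: "[0..<Suc N] = [0..<c] @ c # [Suc c..<Suc N]"
  proof -
    have cleN: "c \<le> N" using cle N_def by simp
    have e: "c + (Suc N - c) = Suc N" using cleN by simp
    have "[0..<Suc N] = [0..<c] @ [c..<Suc N]"
      using upt_add_eq_append[of 0 c "Suc N - c"] unfolding e by simp
    moreover have "[c..<Suc N] = c # [Suc c..<Suc N]" using cleN by (simp add: upt_conv_Cons del: upt_Suc)
    ultimately show ?thesis by simp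
  qed
  have m3: "map fV [Suc c..<Suc N] = replicate (N - c) b"
  proof -
    have "map fV [Suc c..<Suc N] = map (\<lambda>_. b) [Suc c..<Suc N]"
      by (rule map_cong) (use insert(2) in \<open>auto simp: fV_def\<close>)
    then show ?thesis by (simp add: map_replicate_const del: upt_Suc)
  qed
  have "foldl (\<lambda>z v. sdeg (v + k) z) (dec1 s (Pre @ replicate r b)) (sorted_list_of_set (insert c A))
      = sdeg (c + k) (dec1 s (Pre @ map fA [0..<N]))"
    using IH sorted_insert_max[OF insert(1,2)] by simp
  also have "\<dots> = dec1 s (Pre @ map fV [0..<Suc N])"
  proof -
    have M: "map fA [0..<N] = map fV [0..<c] @ replicate (N - c) b"
      unfolding split by (simp add: m1 m2 del: upt_Suc)
    have R: "map fV [0..<Suc N] = map fV [0..<c] @ False # replicate (N - c) b"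
    proof -
      have "fV c = False" by (simp add: fV_def)
      then show ?thesis unfolding split2 by (simp add: m3 del: upt_Suc)
    qed
    have len: "c + k \<le> length (Pre @ map fA [0..<N])" using cle insert(5) N_def by simp
    have "sdeg (c + k) (dec1 s (Pre @ map fA [0..<N])) = dec1 s (take (c + k) (Pre @ map fA [0..<N]) @ False # drop (c + k) (Pre @ map fA [0..<N]))"
      by (rule dec1_sdeg[OF len])
    also have "\<dots> = dec1 s (Pre @ map fV [0..<Suc N])"
      unfolding M R using insert(5) by (simp del: upt_Suc)
    finally show ?thesis .
  qed
  finally show ?case by (simp add: cardI N_def fV_def)
qed

lemma degs_dec1:
  assumes "finite V" "V \<subseteq> {0..<r + card V}" "length Pre = k"
  shows "degs k V (dec1 s (Pre @ replicate r b)) = dec1 s (Pre @ map (\<lambda>i. if i \<in> V then False else b) [0..<r + card V])"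
  using degs_dec1_aux[OF assms(1) assms(2,3)] by (simp add: degs_def)

lemma faces_upt: "a \<le> b \<Longrightarrow> b \<le> length x \<Longrightarrow> faces [a..<b] x = take a x @ drop b x"
proof (induction "b - a" arbitrary: a)
  case 0 then show ?case by (simp add: faces_def)
next
  case (Suc d)
  then have ab: "a < b" by simp
  have "faces [a..<b] x = dface a (faces [Suc a..<b] x)"
    using ab by (simp add: faces_def upt_conv_Cons)
  also have "\<dots> = dface a (take (Suc a) x @ drop b x)" using Suc by simp
  also have "\<dots> = take a x @ drop b x" using ab Suc.prems
    by (simp add: dface_def take_Suc_conv_app_nth min_def)
  finally show ?case .
qed

lemma take_dec1: "i \<le> length L \<Longrightarrow> take (Suc i) (dec1 s L) = dec1 s (take i L)"
  by (induction L arbitrary: s i) (auto simp: take_Cons split: nat.split)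

lemma drop_dec1_rep: "i \<le> n \<Longrightarrow> drop i (dec1 s (replicate n True)) = dec1 (s \<noteq> odd i) (replicate (n - i) True)"
proof (induction i arbitrary: s n)
  case 0 then show ?case by simp
next
  case (Suc i)
  then obtain n' where n: "n = Suc n'" by (cases n) auto
  show ?case using Suc.IH[of n' "\<not> s"] Suc.prems n by auto
qed

lemma bool_xx[simp]: "(s \<noteq> (s \<noteq> t)) = t" "(s = (s = t)) = t" "(s = (\<not> s)) = False"
  by auto

lemma dec1_rep_append:
  "dec1 s (replicate a True) @ dec1 t L = dec1 s (replicate a True @ ((s \<noteq> odd a) \<noteq> t) # L)"
proof (induction a arbitrary: s)
  case 0 then show ?case by simp
next
  case (Suc a) then show ?case by (cases s) auto
qed

lemma dec1_face0: "dface 0 (dec1 s (w # ws)) = dec1 (s \<noteq> w) ws"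
  by (simp add: dface_def)

lemma dec1_face_mid:
  "Suc i < length ws \<Longrightarrow>
   dface (Suc i) (dec1 s ws) = dec1 s (take i ws @ (ws ! i \<noteq> ws ! Suc i) # drop (Suc (Suc i)) ws)"
proof (induction ws arbitrary: s i)
  case Nil then show ?case by simp
next
  case (Cons w ws)
  show ?case
  proof (cases i)
    case 0
    then obtain w2 rest where ws: "ws = w2 # rest" using Cons.prems by (cases ws) auto
    show ?thesis using 0 ws by (simp add: dface_def) (cases s; cases w; cases w2; simp)
  next
    case (Suc j)
    then have "Suc j < length ws" using Cons.prems by simp
    then show ?thesis using Suc Cons.IH[of j] by (simp add: dface_def)
  qed
qed

lemma dec1_face_last: "ws \<noteq> [] \<Longrightarrow> dface (length ws) (dec1 s ws) = dec1 s (butlast ws)"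
proof (induction ws arbitrary: s)
  case Nil then show ?case by simp
next
  case (Cons w ws)
  then show ?case by (cases ws) (auto simp: dface_def)
qed

lemma dec1_Cons_shape: "\<exists>r. dec1 s ws = s # r"
  by (cases ws) auto

lemma nondeg_dec1: "nondeg (dec1 s ws) \<longleftrightarrow> False \<notin> set ws"
proof (induction ws arbitrary: s)
  case Nil then show ?case by simp
next
  case (Cons w ws)
  obtain r where r: "dec1 (s \<noteq> w) ws = (s \<noteq> w) # r" using dec1_Cons_shape by blast
  have e: "dec1 s (w # ws) = s # (s \<noteq> w) # r" by (simp only: dec1.simps r)
  have "nondeg (dec1 s (w # ws)) = (w \<and> nondeg (dec1 (s \<noteq> w) ws))"
    by (simp only: e nondeg_Cons2 bool_xx r)
  then show ?case using Cons[of "s \<noteq> w"] by auto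
qed

lemma dec1_rep_False: "dec1 s (replicate q False) = replicate (Suc q) s"
  by (induction q) auto


abbreviation LA :: "bool \<times> bool" where "LA \<equiv> (True, False)"
abbreviation LB :: "bool \<times> bool" where "LB \<equiv> (False, True)"
abbreviation LC :: "bool \<times> bool" where "LC \<equiv> (True, True)"
abbreviation LZ :: "bool \<times> bool" where "LZ \<equiv> (False, False)"

definition ABw :: "nat \<Rightarrow> (bool \<times> bool) list set" where
  "ABw k = {w. set w \<subseteq> {LA, LB} \<and> length w = k}"

definition cntA :: "(bool \<times> bool) list \<Rightarrow> nat" where
  "cntA w = length (filter (\<lambda>l. l = LA) w)"

definition Wodd :: "nat \<Rightarrow> (bool \<times> bool) list set" where
  "Wodd k = {w \<in> ABw k. odd (cntA w)}"

definition Wev :: "nat \<Rightarrow> (bool \<times> bool) list set" where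
  "Wev k = {w \<in> ABw k. even (cntA w)}"

lemma finite_ABw[simp]: "finite (ABw k)"
  unfolding ABw_def by (rule finite_lists_length_eq) simp

lemma finite_Wodd[simp]: "finite (Wodd k)" and finite_Wev[simp]: "finite (Wev k)"
  by (auto simp: Wodd_def Wev_def)

lemma cntA_simps[simp]: "cntA [] = 0" "cntA (LA # u) = Suc (cntA u)" "cntA (LB # u) = cntA u"
  "cntA (u @ v) = cntA u + cntA v"
  by (auto simp: cntA_def)

lemma ABw_0[simp]: "ABw 0 = {[]}" by (auto simp: ABw_def)
lemma Wodd_0[simp]: "Wodd 0 = {}" by (auto simp: Wodd_def)
lemma Wev_0[simp]: "Wev 0 = {[]}" by (auto simp: Wev_def)

lemma ABw_Suc: "ABw (Suc M) = Cons LB ` ABw M \<union> Cons LA ` ABw M"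
proof (intro set_eqI iffI)
  fix w assume "w \<in> ABw (Suc M)"
  then obtain l u where w: "w = l # u" "l \<in> {LA, LB}" "u \<in> ABw M"
    by (cases w) (auto simp: ABw_def)
  then show "w \<in> Cons LB ` ABw M \<union> Cons LA ` ABw M" by auto
qed (auto simp: ABw_def)

lemma ABw_Suc_snoc: "ABw (Suc M) = (\<lambda>u. u @ [LB]) ` ABw M \<union> (\<lambda>u. u @ [LA]) ` ABw M"
proof (intro set_eqI iffI)
  fix w assume h: "w \<in> ABw (Suc M)"
  then have "w \<noteq> []" by (auto simp: ABw_def)
  then obtain l u where w: "w = u @ [l]" by (metis rev_exhaust)
  then have "l \<in> {LA, LB}" "u \<in> ABw M" using h by (auto simp: ABw_def)
  then show "w \<in> (\<lambda>u. u @ [LB]) ` ABw M \<union> (\<lambda>u. u @ [LA]) ` ABw M" using w by auto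
qed (auto simp: ABw_def)

lemma Wodd_Suc: "Wodd (Suc M) = Cons LB ` Wodd M \<union> Cons LA ` Wev M"
  unfolding Wodd_def Wev_def ABw_Suc by auto

lemma Wev_Suc: "Wev (Suc M) = Cons LB ` Wev M \<union> Cons LA ` Wodd M"
  unfolding Wodd_def Wev_def ABw_Suc by auto

lemma Wodd_Suc_snoc: "Wodd (Suc M) = (\<lambda>u. u @ [LB]) ` Wodd M \<union> (\<lambda>u. u @ [LA]) ` Wev M"
  unfolding Wodd_def Wev_def ABw_Suc_snoc by auto

lemma sum_union_images:
  assumes "inj f" "inj g" "finite X" "finite Y" "f ` X \<inter> g ` Y = {}"
  shows "sum h (f ` X \<union> g ` Y) = sum (h \<circ> f) X + sum (h \<circ> g) Y"
proof -
  have "sum h (f ` X \<union> g ` Y) = sum h (f ` X) + sum h (g ` Y)"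
    using assms by (intro sum.union_disjoint) auto
  also have "\<dots> = sum (h \<circ> f) X + sum (h \<circ> g) Y"
    using assms by (simp add: sum.reindex inj_on_subset[OF assms(1)] inj_on_subset[OF assms(2)])
  finally show ?thesis .
qed

lemma sum_Wev_Suc:
  "sum g (Wev (Suc M)) = sum (\<lambda>v. g (LB # v)) (Wev M) + sum (\<lambda>v. g (LA # v)) (Wodd M)"
  unfolding Wev_Suc by (subst sum_union_images) (auto simp: comp_def)

lemma sum_Wodd_Suc:
  "sum g (Wodd (Suc M)) = sum (\<lambda>v. g (LB # v)) (Wodd M) + sum (\<lambda>v. g (LA # v)) (Wev M)"
  unfolding Wodd_Suc by (subst sum_union_images) (auto simp: comp_def)

lemma sum_Wodd_Suc_snoc:
  "sum g (Wodd (Suc M)) = sum (\<lambda>v. g (v @ [LB])) (Wodd M) + sum (\<lambda>v. g (v @ [LA])) (Wev M)"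
  unfolding Wodd_Suc_snoc by (subst sum_union_images) (auto simp: comp_def inj_def)

lemma sum_Wodd_butlast:
  "sum (\<lambda>w. g (butlast w)) (Wodd (Suc M)) = sum g (Wodd M) + (sum g (Wev M) :: 'a set)"
  by (simp add: sum_Wodd_Suc_snoc)

lemma sum_Wodd_headA:
  "sum (\<lambda>w. if hd w = LA then g (tl w) else {}) (Wodd (Suc M)) = (sum g (Wev M) :: 'a set)"
  by (simp add: sum_Wodd_Suc)


definition wmerge :: "nat \<Rightarrow> (bool \<times> bool) list \<Rightarrow> (bool \<times> bool) list" where
  "wmerge i w = take i w @ xorp (w ! i) (w ! Suc i) # drop (Suc (Suc i)) w"

definition sw :: "nat \<Rightarrow> (bool \<times> bool) list \<Rightarrow> (bool \<times> bool) list" where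
  "sw i w = take i w @ w ! Suc i # w ! i # drop (Suc (Suc i)) w"

lemma cntA_Cons: "cntA (a # u) = (if a = LA then Suc (cntA u) else cntA u)"
  by (simp add: cntA_def)

lemma split_at2: "Suc i < length w \<Longrightarrow> w = take i w @ w ! i # w ! Suc i # drop (Suc (Suc i)) w"
  by (metis Cons_nth_drop_Suc Suc_lessD append_take_drop_id)

lemma sw_props:
  assumes "Suc i < length w"
  shows "length (sw i w) = length w" "set (sw i w) = set w" "cntA (sw i w) = cntA w"
    "sw i w ! i = w ! Suc i" "sw i w ! Suc i = w ! i" "sw i (sw i w) = w"
    "wmerge i (sw i w) = wmerge i w"
proof -
  have lt: "length (take i w) = i" using assms by simp
  show "length (sw i w) = length w" using assms by (simp add: sw_def)
  have es: "set (take i w @ w ! i # w ! Suc i # drop (Suc (Suc i)) w) = set w"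
    using arg_cong[OF split_at2[OF assms, symmetric], of set] .
  show "set (sw i w) = set w" using es unfolding sw_def by auto
  have ec: "cntA (take i w @ w ! i # w ! Suc i # drop (Suc (Suc i)) w) = cntA w"
    using arg_cong[OF split_at2[OF assms, symmetric], of cntA] .
  show "cntA (sw i w) = cntA w" using ec unfolding sw_def by (simp add: cntA_Cons split: if_splits)
  show a: "sw i w ! i = w ! Suc i" "sw i w ! Suc i = w ! i"
    unfolding sw_def using lt by (simp_all add: nth_append)
  have t: "take i (sw i w) = take i w" unfolding sw_def using lt by simp
  have d: "drop (Suc (Suc i)) (sw i w) = drop (Suc (Suc i)) w" unfolding sw_def using lt by simp
  have "sw i (sw i w) = take i w @ w ! i # w ! Suc i # drop (Suc (Suc i)) w"
    by (simp only: sw_def[of i "sw i w"] t d a)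
  then show "sw i (sw i w) = w" using split_at2[OF assms] by simp
  show "wmerge i (sw i w) = wmerge i w"
    unfolding wmerge_def t d a by (simp add: xorp_def) blast
qed

lemma wmerge_LZ: "Suc i < length w \<Longrightarrow> w ! i = w ! Suc i \<Longrightarrow> LZ \<in> set (wmerge i w)"
  by (simp add: wmerge_def xorp_def)

lemma merge_cancel:
  assumes h0: "\<And>u. LZ \<in> set u \<Longrightarrow> h u = {}"
  shows "sum (\<lambda>w. sum (\<lambda>i. h (wmerge i w)) {..<L - 1}) (Wodd L) = {}"
proof -
  define S where "S = Sigma (Wodd L) (\<lambda>_. {..<L - 1})"
  have finS: "finite S" unfolding S_def by simp
  have "sum (\<lambda>w. sum (\<lambda>i. h (wmerge i w)) {..<L - 1}) (Wodd L) = sum (\<lambda>(w, i). h (wmerge i w)) S"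
    unfolding S_def by (rule sum.Sigma) auto
  also have "\<dots> = {}"
  proof -
    define X0 where "X0 = {p \<in> S. fst p ! snd p = fst p ! Suc (snd p)}"
    define X1 where "X1 = {p \<in> S. fst p ! snd p = LA \<and> fst p ! Suc (snd p) = LB}"
    define X2 where "X2 = {p \<in> S. fst p ! snd p = LB \<and> fst p ! Suc (snd p) = LA}"
    have memS: "p \<in> S \<longleftrightarrow> fst p \<in> Wodd L \<and> snd p < L - 1" for p
      unfolding S_def by (cases p) auto
    have lenS: "p \<in> S \<Longrightarrow> Suc (snd p) < length (fst p)" for p
      using memS[of p] by (auto simp: Wodd_def ABw_def)
    have letters: "p \<in> S \<Longrightarrow> fst p ! snd p \<in> {LA, LB} \<and> fst p ! Suc (snd p) \<in> {LA, LB}" for p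
      using lenS[of p] memS[of p] unfolding Wodd_def ABw_def
      by (metis (no_types, lifting) Suc_lessD mem_Collect_eq nth_mem subsetD)
    have Sdec: "S = X0 \<union> (X1 \<union> X2)"
    proof (intro set_eqI iffI)
      fix p assume p: "p \<in> S"
      from letters[OF p] p show "p \<in> X0 \<union> (X1 \<union> X2)" unfolding X0_def X1_def X2_def by auto
    qed (auto simp: X0_def X1_def X2_def)
    have fin: "finite X0" "finite X1" "finite X2" using finS unfolding X0_def X1_def X2_def by auto
    have "sum (\<lambda>(w, i). h (wmerge i w)) S = sum (\<lambda>(w, i). h (wmerge i w)) X0 + (sum (\<lambda>(w, i). h (wmerge i w)) X1 + sum (\<lambda>(w, i). h (wmerge i w)) X2)"
      unfolding Sdec using fin
      by (simp add: sum.union_disjoint X0_def X1_def X2_def disjoint_iff)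
    moreover have "sum (\<lambda>(w, i). h (wmerge i w)) X0 = {}"
    proof (rule sum.neutral[where 'a="'b set", unfolded set_zero_empty], rule ballI)
      fix p assume "p \<in> X0"
      then show "(\<lambda>(w, i). h (wmerge i w)) p = {}"
        using lenS h0 wmerge_LZ unfolding X0_def by (cases p) auto
    qed
    moreover have "sum (\<lambda>(w, i). h (wmerge i w)) X1 + sum (\<lambda>(w, i). h (wmerge i w)) X2 = {}"
    proof (rule sum_set_cancel_bij)
      let ?f = "\<lambda>(w, i). (sw i w, i)"
      show "bij_betw ?f X1 X2"
      proof (rule bij_betw_byWitness[where f'="?f"])
        show "\<forall>a\<in>X1. ?f (?f a) = a" using lenS sw_props(6) unfolding X1_def by auto
        show "\<forall>a\<in>X2. ?f (?f a) = a" using lenS sw_props(6) unfolding X2_def by auto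
        show "?f ` X1 \<subseteq> X2"
        proof
          fix q assume "q \<in> ?f ` X1"
          then obtain w i where p: "(w, i) \<in> X1" "q = (sw i w, i)" by auto
          then have l: "Suc i < length w" using lenS unfolding X1_def by fastforce
          have "sw i w \<in> Wodd L" using p(1) sw_props[OF l] unfolding X1_def memS Wodd_def ABw_def by auto
          then show "q \<in> X2" using p sw_props[OF l] unfolding X1_def X2_def memS by auto
        qed
        show "?f ` X2 \<subseteq> X1"
        proof
          fix q assume "q \<in> ?f ` X2"
          then obtain w i where p: "(w, i) \<in> X2" "q = (sw i w, i)" by auto
          then have l: "Suc i < length w" using lenS unfolding X2_def by fastforce
          have "sw i w \<in> Wodd L" using p(1) sw_props[OF l] unfolding X2_def memS Wodd_def ABw_def by auto
          then show "q \<in> X1" using p sw_props[OF l] unfolding X1_def X2_def memS by auto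
        qed
      qed
      show "\<And>x. x \<in> X1 \<Longrightarrow> (\<lambda>(w, i). h (wmerge i w)) (?f x) = (\<lambda>(w, i). h (wmerge i w)) x"
        using lenS sw_props(7) unfolding X1_def by auto
    qed
    ultimately show ?thesis by simp
  qed
  finally show ?thesis .
qed


definition nrmw :: "(bool \<times> bool) \<times> (bool \<times> bool) list \<Rightarrow> ((bool \<times> bool) \<times> (bool \<times> bool) list) set" where
  "nrmw z = (if LZ \<in> set (snd z) then {} else {z})"

definition wface :: "nat \<Rightarrow> (bool \<times> bool) \<times> (bool \<times> bool) list \<Rightarrow> (bool \<times> bool) \<times> (bool \<times> bool) list" where
  "wface j z = (case j of 0 \<Rightarrow> (xorp (fst z) (hd (snd z)), tl (snd z))
     | Suc i \<Rightarrow> if Suc i < length (snd z) then (fst z, wmerge i (snd z)) else (fst z, butlast (snd z)))"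

definition wbd :: "(bool \<times> bool) \<times> (bool \<times> bool) list \<Rightarrow> ((bool \<times> bool) \<times> (bool \<times> bool) list) set" where
  "wbd z = (if snd z = [] then {} else (\<Sum>j<Suc (length (snd z)). nrmw (wface j z)))"

definition y :: "nat \<Rightarrow> (bool \<times> bool) list \<Rightarrow> (bool \<times> bool) list" where
  "y k w = replicate k LC @ LB # w"

definition SH :: "nat \<Rightarrow> bool \<times> bool \<Rightarrow> ((bool \<times> bool) \<times> (bool \<times> bool) list) set" where
  "SH m st = (\<Sum>k<m. \<Sum>w\<in>Wodd (m - k). {(st, y k w)})"

lemma sum_lessThan_add: "sum f {..<a + (b::nat)} = sum f {..<a} + sum (\<lambda>j. f (a + j)) {..<b}"
  by (induction b) (simp_all add: add_ac)

lemma sum_SS: "sum g {..<Suc (Suc m)} = g 0 + (sum (\<lambda>i. g (Suc i)) {..<m} + g (Suc m))"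
proof -
  have "sum g {..<Suc (Suc m)} = g 0 + sum (\<lambda>i. g (Suc i)) {..<Suc m}"
    by (rule sum.lessThan_Suc_shift)
  also have "sum (\<lambda>i. g (Suc i)) {..<Suc m} = sum (\<lambda>i. g (Suc i)) {..<m} + g (Suc m)"
    by (rule sum.lessThan_Suc)
  finally show ?thesis .
qed

lemma ABw_noLZ: "w \<in> ABw L \<Longrightarrow> LZ \<notin> set w"
  by (auto simp: ABw_def)

lemma nrmw_simple: "LZ \<notin> set w \<Longrightarrow> nrmw (st, w) = {(st, w)}"
  by (simp add: nrmw_def)

lemma y_Suc: "y (Suc k) w = replicate k LC @ LC # LB # w"
  by (simp add: y_def) (metis append_Cons replicate_Suc replicate_append_same)

lemma LZ_y: "LZ \<in> set (y k w) \<longleftrightarrow> LZ \<in> set w"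
  by (auto simp: y_def)

lemma wbd_y:
  assumes w: "w \<in> ABw (Suc L')"
  shows "wbd (st, y k w) =
     (if k = 0 then {(xorp st LB, w)} else {(xorp st LC, y (k - 1) w)})
   + (if k = 0 then {} else {(st, replicate (k - 1) LC @ LA # w)})
   + (if hd w = LA then {(st, replicate (Suc k) LC @ tl w)} else {})
   + (\<Sum>i<L'. nrmw (st, y k (wmerge i w)))
   + {(st, y k (butlast w))}"
proof -
  have lw: "length w = Suc L'" and nz: "LZ \<notin> set w" and sw: "set w \<subseteq> {LA, LB}" using w by (auto simp: ABw_def)
  then obtain a w' where aw: "w = a # w'" "a \<in> {LA, LB}" by (cases w) auto
  let ?f = "\<lambda>j. nrmw (wface j (st, y k w))"
  have ly: "length (y k w) = Suc k + Suc L'" using lw by (simp add: y_def)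
  have "wbd (st, y k w) = sum ?f {..<Suc k + Suc (Suc L')}"
    unfolding wbd_def using ly by (simp add: y_def)
  also have "\<dots> = sum ?f {..<Suc k} + sum (\<lambda>j. ?f (Suc k + j)) {..<Suc (Suc L')}"
    by (rule sum_lessThan_add)
  also have "sum ?f {..<Suc k} =
     (if k = 0 then {(xorp st LB, w)} else {(xorp st LC, y (k - 1) w)})
   + (if k = 0 then {} else {(st, replicate (k - 1) LC @ LA # w)})"
  proof (cases k)
    case 0
    then show ?thesis using nz by (simp add: wface_def y_def nrmw_def)
  next
    case (Suc k')
    have f0: "?f 0 = {(xorp st LC, y k' w)}"
      using nz Suc by (simp add: wface_def y_def nrmw_def)
    have fi: "?f (Suc i) = {}" if "i < k'" for i
    proof -
      have "Suc i < length (y k w)" using ly that Suc by simp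
      moreover have "y k w ! i = y k w ! Suc i" using that Suc by (simp add: y_def nth_append del: replicate_Suc)
      ultimately show ?thesis using wmerge_LZ by (simp add: wface_def nrmw_def)
    qed
    have fk: "?f (Suc k') = {(st, replicate k' LC @ LA # w)}"
    proof -
      have "Suc k' < length (y k w)" using ly Suc by simp
      moreover have "wmerge k' (y k w) = replicate k' LC @ LA # w"
        using Suc by (simp add: wmerge_def y_Suc nth_append xorp_def del: replicate_Suc)
      ultimately show ?thesis using nz by (simp add: wface_def nrmw_def)
    qed
    have bnd: "{..<Suc k} = {..<Suc (Suc k')}" using Suc by simp
    have "sum ?f {..<Suc k} = ?f 0 + (sum (\<lambda>i. ?f (Suc i)) {..<k'} + ?f (Suc k'))"
      unfolding bnd by (rule sum_SS)
    also have "\<dots> = {(xorp st LC, y k' w)} + {(st, replicate k' LC @ LA # w)}"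
      using f0 fi fk by simp
    finally show ?thesis using Suc by simp
  qed
  also have "sum (\<lambda>j. ?f (Suc k + j)) {..<Suc (Suc L')} =
      ?f (Suc k) + (sum (\<lambda>i. ?f (Suc k + Suc i)) {..<L'} + ?f (Suc k + Suc L'))"
    using sum_SS[of "\<lambda>j. ?f (Suc k + j)" L'] by simp
  also have "?f (Suc k) = (if hd w = LA then {(st, replicate (Suc k) LC @ tl w)} else {})"
  proof -
    have l: "Suc k < length (y k w)" using ly by simp
    have "wmerge k (y k w) = replicate k LC @ xorp LB a # w'"
      using aw by (simp add: wmerge_def y_def nth_append)
    then show ?thesis using l aw nz by (auto simp: wface_def nrmw_def xorp_def replicate_append_same[symmetric])
  qed
  also have "(\<lambda>i. ?f (Suc k + Suc i)) = (\<lambda>i. if i < L' then nrmw (st, y k (wmerge i w)) else ?f (Suc k + Suc i))"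
  proof (rule ext)
    fix i show "?f (Suc k + Suc i) = (if i < L' then nrmw (st, y k (wmerge i w)) else ?f (Suc k + Suc i))"
    proof (cases "i < L'")
      case True
      then have l: "Suc (Suc k + i) < length (y k w)" using ly by simp
      have "wmerge (Suc k + i) (y k w) = y k (wmerge i w)"
        using True lw by (simp add: wmerge_def y_def nth_append eval_nat_numeral)
      then show ?thesis using l True by (simp add: wface_def)
    qed simp
  qed
  also have "sum (\<lambda>i. if i < L' then nrmw (st, y k (wmerge i w)) else ?f (Suc k + Suc i)) {..<L'} = (\<Sum>i<L'. nrmw (st, y k (wmerge i w)))"
    by (rule sum.cong) auto
  also have "?f (Suc k + Suc L') = {(st, y k (butlast w))}"
  proof -
    have "butlast (y k w) = y k (butlast w)" using aw by (simp add: y_def butlast_append)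
    moreover have "LZ \<notin> set (y k (butlast w))" using nz LZ_y by (metis in_set_butlastD)
    ultimately show ?thesis using ly by (simp add: wface_def nrmw_def)
  qed
  finally show ?thesis by (simp add: add_ac)
qed


lemma word_identity:
  fixes s :: bool and n' :: nat
  defines "st \<equiv> (s, s)"
  shows "(\<Sum>k<Suc n'. \<Sum>w\<in>Wodd (Suc n' - k). wbd (st, y k w)) + SH n' (xorp st LC) + SH n' st
       = {(st, replicate (Suc n') LC)} + (\<Sum>w\<in>Wodd (Suc n'). {(xorp st LB, w)}) + (\<Sum>w\<in>Wev (Suc n'). {(st, w)})"
proof -
  define F0 where "F0 k w = (if k = 0 then {(xorp st LB, w)} else {(xorp st LC, y (k - 1) w)})" for k w
  define FK where "FK k w = (if k = 0 then {} else {(st, replicate (k - 1) LC @ LA # w)})" for k w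
  define F1 where "F1 k w = (if hd w = LA then {(st, replicate (Suc k) LC @ tl w)} else {})" for k w
  define FM where "FM k w = (\<Sum>i<n' - k. nrmw (st, y k (wmerge i w)))" for k w
  define FL where "FL k w = {(st, y k (butlast w))}" for k w
  have step1: "(\<Sum>k<Suc n'. \<Sum>w\<in>Wodd (Suc n' - k). wbd (st, y k w))
     = (\<Sum>k<Suc n'. \<Sum>w\<in>Wodd (Suc (n' - k)). F0 k w + FK k w + F1 k w + FM k w + FL k w)"
  proof (rule sum.cong[OF refl])
    fix k assume "k \<in> {..<Suc n'}"
    then have e: "Suc n' - k = Suc (n' - k)" by simp
    show "(\<Sum>w\<in>Wodd (Suc n' - k). wbd (st, y k w)) = (\<Sum>w\<in>Wodd (Suc (n' - k)). F0 k w + FK k w + F1 k w + FM k w + FL k w)"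
      unfolding e
    proof (rule sum.cong[OF refl])
      fix w assume "w \<in> Wodd (Suc (n' - k))"
      then have "w \<in> ABw (Suc (n' - k))" by (simp add: Wodd_def)
      from wbd_y[OF this, of st k] show "wbd (st, y k w) = F0 k w + FK k w + F1 k w + FM k w + FL k w"
        by (simp add: F0_def FK_def F1_def FM_def FL_def)
    qed
  qed
  define T0 where "T0 = (\<Sum>k<Suc n'. \<Sum>w\<in>Wodd (Suc (n' - k)). F0 k w)"
  define TK where "TK = (\<Sum>k<Suc n'. \<Sum>w\<in>Wodd (Suc (n' - k)). FK k w)"
  define T1 where "T1 = (\<Sum>k<Suc n'. \<Sum>w\<in>Wodd (Suc (n' - k)). F1 k w)"
  define TM where "TM = (\<Sum>k<Suc n'. \<Sum>w\<in>Wodd (Suc (n' - k)). FM k w)"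
  define TL where "TL = (\<Sum>k<Suc n'. \<Sum>w\<in>Wodd (Suc (n' - k)). FL k w)"
  have step2: "(\<Sum>k<Suc n'. \<Sum>w\<in>Wodd (Suc n' - k). wbd (st, y k w)) = T0 + TK + T1 + TM + TL"
    unfolding step1 T0_def TK_def T1_def TM_def TL_def by (simp only: sum.distrib)
  define EO where "EO = (\<Sum>w\<in>Wodd (Suc n'). {(xorp st LB, w)})"
  define EE where "EE = (\<Sum>w\<in>Wev (Suc n'). {(st, w)})"
  define HB where "HB k = (\<Sum>v\<in>Wev (n' - k). {(st, replicate k LC @ LB # v)})" for k
  define HA where "HA k = (\<Sum>v\<in>Wodd (n' - k). {(st, replicate k LC @ LA # v)})" for k
  define XB where "XB = (\<Sum>k<n'. HB (Suc k))"
  define XA where "XA = (\<Sum>k<n'. HA (Suc k))"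
  define E2 where "E2 = (\<Sum>k<n'. HA k)"
  have T0: "T0 = EO + SH n' (xorp st LC)"
  proof -
    have "T0 = (\<Sum>w\<in>Wodd (Suc (n' - 0)). F0 0 w) + (\<Sum>k<n'. \<Sum>w\<in>Wodd (Suc (n' - Suc k)). F0 (Suc k) w)"
      unfolding T0_def by (rule sum.lessThan_Suc_shift)
    also have "(\<Sum>w\<in>Wodd (Suc (n' - 0)). F0 0 w) = EO" by (simp add: EO_def F0_def)
    also have "(\<Sum>k<n'. \<Sum>w\<in>Wodd (Suc (n' - Suc k)). F0 (Suc k) w) = SH n' (xorp st LC)"
      unfolding SH_def by (rule sum.cong[OF refl]) (simp add: F0_def Suc_diff_Suc)
    finally show ?thesis .
  qed
  have TK: "TK = E2"
  proof -
    have "TK = (\<Sum>w\<in>Wodd (Suc (n' - 0)). FK 0 w) + (\<Sum>k<n'. \<Sum>w\<in>Wodd (Suc (n' - Suc k)). FK (Suc k) w)"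
      unfolding TK_def by (rule sum.lessThan_Suc_shift)
    also have "(\<Sum>w\<in>Wodd (Suc (n' - 0)). FK 0 w) = {}" by (simp add: FK_def)
    also have "(\<Sum>k<n'. \<Sum>w\<in>Wodd (Suc (n' - Suc k)). FK (Suc k) w) = E2"
      unfolding E2_def HA_def by (rule sum.cong[OF refl]) (simp add: FK_def Suc_diff_Suc)
    finally show ?thesis by simp
  qed
  have T1: "T1 = XB + XA + {(st, replicate (Suc n') LC)}"
  proof -
    have "T1 = (\<Sum>k<Suc n'. \<Sum>u\<in>Wev (n' - k). {(st, replicate (Suc k) LC @ u)})"
      unfolding T1_def F1_def by (rule sum.cong[OF refl]) (rule sum_Wodd_headA)
    also have "\<dots> = (\<Sum>k<n'. \<Sum>u\<in>Wev (n' - k). {(st, replicate (Suc k) LC @ u)}) + {(st, replicate (Suc n') LC)}"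
      by (simp add: sum.lessThan_Suc)
    also have "(\<Sum>k<n'. \<Sum>u\<in>Wev (n' - k). {(st, replicate (Suc k) LC @ u)}) = (\<Sum>k<n'. HB (Suc k) + HA (Suc k))"
    proof (rule sum.cong[OF refl])
      fix k assume "k \<in> {..<n'}"
      then have e: "n' - k = Suc (n' - Suc k)" by simp
      show "(\<Sum>u\<in>Wev (n' - k). {(st, replicate (Suc k) LC @ u)}) = HB (Suc k) + HA (Suc k)"
        unfolding e sum_Wev_Suc HB_def HA_def by simp
    qed
    finally show ?thesis by (simp add: sum.distrib XB_def XA_def)
  qed
  have TM: "TM = {}"
  proof -
    have "TM = (\<Sum>k<Suc n'. {})"
      unfolding TM_def
    proof (rule sum.cong[OF refl])
      fix k assume "k \<in> {..<Suc n'}"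
      have "(\<Sum>w\<in>Wodd (Suc (n' - k)). \<Sum>i<Suc (n' - k) - 1. nrmw (st, y k (wmerge i w))) = {}"
        by (rule merge_cancel) (simp add: nrmw_def LZ_y)
      then show "(\<Sum>w\<in>Wodd (Suc (n' - k)). FM k w) = {}" by (simp add: FM_def)
    qed
    then show ?thesis by simp
  qed
  have TL: "TL = SH n' st + (\<Sum>k<Suc n'. HB k)"
  proof -
    have "TL = (\<Sum>k<Suc n'. (\<Sum>u\<in>Wodd (n' - k). {(st, y k u)}) + (\<Sum>u\<in>Wev (n' - k). {(st, y k u)}))"
      unfolding TL_def FL_def by (rule sum.cong[OF refl]) (rule sum_Wodd_butlast)
    also have "\<dots> = (\<Sum>k<Suc n'. \<Sum>u\<in>Wodd (n' - k). {(st, y k u)}) + (\<Sum>k<Suc n'. HB k)"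
      by (simp add: sum.distrib HB_def y_def)
    also have "(\<Sum>k<Suc n'. \<Sum>u\<in>Wodd (n' - k). {(st, y k u)}) = SH n' st"
      by (simp add: sum.lessThan_Suc SH_def)
    finally show ?thesis .
  qed
  have E1: "(\<Sum>k<Suc n'. HB k) = HB 0 + XB"
    unfolding XB_def by (rule sum.lessThan_Suc_shift)
  have HAn: "HA n' = {}" by (simp add: HA_def)
  have E2: "E2 + XA = HA 0"
  proof -
    have "HA 0 + XA = (\<Sum>k<Suc n'. HA k)" unfolding XA_def by (rule sum.lessThan_Suc_shift[symmetric])
    also have "\<dots> = E2" by (simp add: sum.lessThan_Suc E2_def HAn)
    finally show ?thesis by (simp add: add_set_eq_iff add.commute)
  qed
  have EE: "EE = HB 0 + HA 0"
    unfolding EE_def HB_def HA_def sum_Wev_Suc by simp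
  have "(\<Sum>k<Suc n'. \<Sum>w\<in>Wodd (Suc n' - k). wbd (st, y k w)) + SH n' (xorp st LC) + SH n' st
     = EO + SH n' (xorp st LC) + E2 + (XB + XA + {(st, replicate (Suc n') LC)}) + {} + (SH n' st + (HB 0 + XB)) + SH n' (xorp st LC) + SH n' st"
    unfolding step2 T0 TK T1 TM TL E1 ..
  also have "\<dots> = EO + (E2 + XA) + HB 0 + {(st, replicate (Suc n') LC)}"
    by (simp add: add_ac)
  also have "\<dots> = {(st, replicate (Suc n') LC)} + EO + EE"
    unfolding E2 EE by (simp add: add_ac)
  finally show ?thesis unfolding EO_def EE_def .
qed


definition Q :: "bool \<times> bool \<Rightarrow> perm" where
  "Q u = compE ((idp 2, P (fst u)), P (snd u))"

definition Psi :: "(bool \<times> bool) \<times> (bool \<times> bool) list \<Rightarrow> perm list" where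
  "Psi z = map Q (decp (fst z) (snd z))"

lemma block_comp2: "block_comp [0, Suc 0] [a, b] = a @ map (\<lambda>t. length a + t) b"
  by (simp add: block_comp_def numeral_2_eq_2) (rule map_idI, simp)
lemma idp4: "idp 4 = [0,1,2,3]"
  by (simp add: idp_def eval_nat_numeral)
lemma idp2: "idp 2 = [0, Suc 0]"
  by (simp add: idp_def eval_nat_numeral)

lemma Q_vals: "Q (False, False) = [0,1,2,3]" "Q (False, True) = [0,1,3,2]"
  "Q (True, False) = [1,0,2,3]" "Q (True, True) = [1,0,3,2]"
  by (simp_all add: Q_def compE_def block_comp2 P_def idp2)

lemma Q_eq: "Q (a, b) = Q (c, d) \<Longrightarrow> a = c \<and> b = d"
  by (cases a; cases b; cases c; cases d) (simp_all only: Q_vals list.inject, simp_all)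

lemma inj_Q: "inj Q"
proof (rule injI)
  fix u v assume "Q u = Q v"
  then show "u = v" using Q_eq[of "fst u" "snd u" "fst v" "snd v"] by (simp add: prod_eq_iff)
qed

lemma inj_Psi: "inj Psi"
proof (rule injI)
  fix z z' assume "Psi z = Psi z'"
  then have "decp (fst z) (snd z) = decp (fst z') (snd z')"
    unfolding Psi_def using inj_Q by (simp add: inj_map_eq_map)
  then have "fst z = fst z' \<and> snd z = snd z'" by (rule decp_inj)
  then show "z = z'" by (simp add: prod_eq_iff)
qed

lemma nrm_decp: "nrm (decp (fst z) (snd z)) = (\<lambda>z. decp (fst z) (snd z)) ` nrmw z"
  by (simp add: nrm_def nrmw_def nondeg_decp)

lemma nrm_Psi: "nrm (Psi z) = Psi ` nrmw z"
  unfolding Psi_def nrm_map[OF inj_Q] nrm_decp by (simp add: image_image)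

lemma dface_decp_wface:
  assumes "i \<le> length (snd z)" "snd z \<noteq> []"
  shows "dface i (decp (fst z) (snd z)) = decp (fst (wface i z)) (snd (wface i z))"
proof (cases i)
  case 0
  then obtain w ws where "snd z = w # ws" using assms by (cases "snd z") auto
  then show ?thesis using 0 by (simp add: wface_def dface_def)
next
  case (Suc j)
  show ?thesis
  proof (cases "Suc j < length (snd z)")
    case True
    then show ?thesis using Suc by (simp add: wface_def decp_face_mid wmerge_def)
  next
    case False
    then have il: "i = length (snd z)" using assms Suc by simp
    have "wface i z = (fst z, butlast (snd z))" using Suc False by (simp add: wface_def)
    then show ?thesis using il assms decp_face_last[of "snd z" "fst z"] by simp
  qed
qed

lemma bd_Psi: "bd (Psi z) = Psi ` wbd z"
proof (cases "snd z = []")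
  case True
  then show ?thesis by (simp add: bd_def wbd_def Psi_def)
next
  case False
  have "bd (Psi z) = modsum {0..<Suc (length (snd z))} (\<lambda>i. nrm (dface i (Psi z)))"
    using False by (simp add: bd_def Psi_def)
  also have "\<dots> = (\<Sum>i<Suc (length (snd z)). Psi ` nrmw (wface i z))"
  proof -
    have "\<And>i. i \<in> {..<Suc (length (snd z))} \<Longrightarrow> nrm (dface i (Psi z)) = Psi ` nrmw (wface i z)"
    proof -
      fix i assume "i \<in> {..<Suc (length (snd z))}"
      then have "dface i (Psi z) = Psi (wface i z)"
        using dface_decp_wface[of i z] False by (simp add: Psi_def dface_map)
      then show "nrm (dface i (Psi z)) = Psi ` nrmw (wface i z)" by (simp add: nrm_Psi)
    qed
    then show ?thesis by (simp add: modsum_sum atLeast0LessThan)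
  qed
  also have "\<dots> = Psi ` wbd z"
  proof -
    have "wbd z = (\<Sum>j<Suc (length (snd z)). nrmw (wface j z))"
      unfolding wbd_def using False by (rule if_not_P)
    then show ?thesis by (simp only: image_sum_set[OF inj_Psi])
  qed
  finally show ?thesis .
qed

lemma lin_bd_Psi: "finite Z \<Longrightarrow> lin bd (Psi ` Z) = Psi ` lin wbd Z"
proof -
  assume fZ: "finite Z"
  have "lin bd (Psi ` Z) = sum bd (Psi ` Z)" using fZ by (simp add: lin_sum)
  also have "\<dots> = sum (\<lambda>z. bd (Psi z)) Z"
  proof -
    have "inj_on Psi Z" using inj_Psi by (rule inj_on_subset) simp
    from sum.reindex[OF this, of bd] show ?thesis by (simp add: comp_def)
  qed
  also have "\<dots> = sum (\<lambda>z. Psi ` wbd z) Z" by (simp add: bd_Psi)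
  also have "\<dots> = Psi ` lin wbd Z" using fZ by (simp add: lin_sum image_sum_set[OF inj_Psi])
  finally show ?thesis .
qed

lemma lin_nrm_map: "lin (\<lambda>u. nrm (map g u)) (nrm z) = nrm (map g z)"
proof (cases "nondeg z")
  case True then show ?thesis by (simp add: nrm_def)
next
  case False
  then have "\<not> nondeg (map g z)" by (auto simp: nondeg_def)
  then show ?thesis using False by (simp add: nrm_def)
qed



definition xs :: "bool \<Rightarrow> nat \<Rightarrow> perm list" where
  "xs s n = map P (dec1 s (replicate n True))"

lemma nondeg_xs: "nondeg (xs s n)"
  by (simp add: xs_def nondeg_map[OF inj_P] nondeg_dec1)

lemma length_xs[simp]: "length (xs s n) = Suc n"
  by (simp add: xs_def)

lemma bd_xs: "bd (xs s (Suc n')) = {xs (\<not> s) n'} + {xs s n'}"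
proof -
  let ?x = "xs s (Suc n')"
  let ?f = "\<lambda>i. nrm (dface i ?x)"
  have "bd ?x = (\<Sum>i<Suc (Suc n'). ?f i)"
    by (simp add: bd_def modsum_sum atLeast0LessThan)
  also have "\<dots> = ?f 0 + ((\<Sum>i<n'. ?f (Suc i)) + ?f (Suc n'))" by (rule sum_SS)
  also have "?f 0 = {xs (\<not> s) n'}"
    by (simp add: xs_def dface_map dface_def nrm_def nondeg_map[OF inj_P] nondeg_dec1)
  also have "(\<Sum>i<n'. ?f (Suc i)) = {}"
  proof (rule sum.neutral[where 'a="perm list set", unfolded set_zero_empty], rule ballI)
    fix i assume i: "i \<in> {..<n'}"
    then have "Suc i < length (replicate (Suc n') True)" by simp
    from dec1_face_mid[OF this, of s]
    have "\<not> nondeg (dface (Suc i) (dec1 s (replicate (Suc n') True)))"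
      using i by (simp add: nondeg_dec1 nth_Cons' del: replicate_Suc)
    then show "?f (Suc i) = {}" unfolding xs_def dface_map nrm_def nondeg_map[OF inj_P] by simp
  qed
  also have "?f (Suc n') = {xs s n'}"
  proof -
    have bl: "butlast (replicate (Suc n') True) = replicate n' True" by (induction n') auto
    have "dface (Suc n') (dec1 s (replicate (Suc n') True)) = dec1 s (replicate n' True)"
      using dec1_face_last[of "replicate (Suc n') True" s] unfolding bl by simp
    then show ?thesis unfolding xs_def dface_map nrm_def nondeg_map[OF inj_P]
      by (simp add: nondeg_dec1)
  qed
  finally show ?thesis by simp
qed

lemma zip_xs: "zip (xs s n) (xs s n) = map (\<lambda>(a, b). (P a, P b)) (decp (s, s) (replicate n LC))"
proof -
  have "zip (xs s n) (xs s n) = map (\<lambda>(a, b). (P a, P b)) (zip (dec1 s (replicate n True)) (dec1 s (replicate n True)))"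
    by (simp add: xs_def zip_map_map)
  also have "zip (dec1 s (replicate n True)) (dec1 s (replicate n True)) = decp (s, s) (replicate n LC)"
    by (simp add: zip_dec1 zip_replicate)
  finally show ?thesis .
qed

lemma NEg_xs: "NEg (xs s n) = Psi ` {((s, s), replicate n LC)}"
proof -
  have hg: "hom_g (P b) = Q (b, b)" for b by (cases b) (simp_all add: hom_g_def Q_vals P_def idp4)
  have "map hom_g (xs s n) = map (\<lambda>b. Q (b, b)) (dec1 s (replicate n True))"
    by (simp add: xs_def hg)
  also have "\<dots> = map Q (zip (dec1 s (replicate n True)) (dec1 s (replicate n True)))"
    by (simp add: zip_same_conv_map)
  also have "\<dots> = Psi ((s, s), replicate n LC)"
    by (simp add: Psi_def zip_dec1 zip_replicate)
  finally have "map hom_g (xs s n) = Psi ((s, s), replicate n LC)" .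
  then show ?thesis by (simp add: NEg_def nrm_Psi nrmw_def)
qed


lemma x0_dec: "x0 = map P (dec1 False [])"
  by (simp add: x0_def P_def idp2)

lemma degs_empty[simp]: "degs k {} u = u"
  by (simp add: degs_def)

lemma degs_x0: "degs 0 {0..<N} x0 = replicate (Suc N) (idp 2)"
proof -
  have "degs 0 {0..<N} (dec1 False ([] @ replicate 0 False)) =
        dec1 False ([] @ map (\<lambda>i. if i \<in> {0..<N} then False else False) [0..<0 + card {0..<N}])"
    by (rule degs_dec1) auto
  then have d: "degs 0 {0..<N} (dec1 False []) = replicate (Suc N) False"
    by (simp add: map_replicate_trivial dec1_rep_False del: replicate_Suc)
  have "degs 0 {0..<N} x0 = map P (degs 0 {0..<N} (dec1 False []))" by (simp only: x0_dec degs_map)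
  also have "\<dots> = replicate (Suc N) (P False)" unfolding d by (simp del: replicate_Suc)
  finally show ?thesis by (simp add: P_def idp2 del: replicate_Suc)
qed

lemma nondeg_zip1: "nondeg u \<Longrightarrow> nondeg (zip u v)"
  by (auto simp: nondeg_def)

lemma nondeg_map_Pair: "nondeg (map (Pair e) a) \<longleftrightarrow> nondeg a"
  by (rule nondeg_map) (simp add: inj_def)

lemma subsets_card0: "{A. A \<subseteq> {0..<(N::nat)} \<and> card A = 0} = {{}}"
proof -
  have "\<And>A. A \<subseteq> {0..<N} \<Longrightarrow> card A = 0 \<Longrightarrow> A = {}"
    by (metis card_0_eq finite_atLeastLessThan finite_subset)
  then show ?thesis by auto
qed

lemma subsets_cardfull: "{A. A \<subseteq> {0..<(N::nat)} \<and> card A = N} = {{0..<N}}"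
proof -
  have "\<And>A. A \<subseteq> {0..<N} \<Longrightarrow> card A = N \<Longrightarrow> A = {0..<N}"
    using card_subset_eq[of "{0..<N}"] by auto
  then show ?thesis by auto
qed

lemma EZ_x0_right:
  assumes "nondeg u" "length u = Suc N"
  shows "EZ u x0 = {zip u (replicate (Suc N) (idp 2))}"
proof -
  have "EZ u x0 = modsum {A. A \<subseteq> {0..<N} \<and> card A = 0} (\<lambda>A. nrm (zip (degs 0 A u) (degs 0 ({0..<N} - A) x0)))"
    using assms by (simp add: EZ_def x0_def)
  also have "\<dots> = nrm (zip u (replicate (Suc N) (idp 2)))"
    unfolding subsets_card0 by (simp add: modsum_sum degs_x0)
  also have "\<dots> = {zip u (replicate (Suc N) (idp 2))}"
    using nondeg_zip1[OF assms(1)] by (simp add: nrm_def)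
  finally show ?thesis .
qed

lemma EZ_x0_left:
  assumes "nondeg a" "length a = Suc N"
  shows "EZ x0 a = {map (Pair (idp 2)) a}"
proof -
  have "EZ x0 a = modsum {A. A \<subseteq> {0..<N} \<and> card A = N} (\<lambda>A. nrm (zip (degs 0 A x0) (degs 0 ({0..<N} - A) a)))"
    using assms by (simp add: EZ_def x0_def)
  also have "\<dots> = nrm (map (Pair (idp 2)) a)"
    unfolding subsets_cardfull using assms(2) by (simp add: modsum_sum degs_x0 zip_replicate1 del: replicate_Suc)
  also have "\<dots> = {map (Pair (idp 2)) a}"
  proof -
    have "nondeg (map (Pair (idp 2)) a)" using assms(1) by (rule nondeg_map_Pair[THEN iffD2])
    then show ?thesis by (simp add: nrm_def)
  qed
  finally show ?thesis .
qed

lemma block_comp2': "block_comp [Suc 0, 0] [a, b] = map (\<lambda>t. length b + t) a @ b"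
  by (simp add: block_comp_def numeral_2_eq_2) (rule map_idI, simp)

lemma hom_f_P: "compE ((P b, idp 2), idp 2) = hom_f (P b)"
  by (cases b) (simp_all add: compE_def P_def idp2 idp4 hom_f_def block_comp2 block_comp2')

lemma NEf_Fmap_xs: "NEf (xs s n) = Fmap (xs s n)"
proof -
  let ?x = "xs s n"
  let ?r = "replicate (Suc n) (idp 2)"
  have e1: "EZ ?x x0 = {zip ?x ?r}" using EZ_x0_right[OF nondeg_xs] by simp
  have nd: "nondeg (zip ?x ?r)" by (rule nondeg_zip1[OF nondeg_xs])
  have e2: "EZ (zip ?x ?r) x0 = {zip (zip ?x ?r) ?r}"
    by (rule EZ_x0_right[OF nd]) simp
  have "Fmap ?x = nrm (map compE (zip (zip ?x ?r) ?r))"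
    by (simp add: Fmap_def EZ3_def e1 e2 del: replicate_Suc)
  also have "map compE (zip (zip ?x ?r) ?r) = map (\<lambda>\<sigma>. compE ((\<sigma>, idp 2), idp 2)) ?x"
  proof -
    have "zip ?x ?r = map (\<lambda>\<sigma>. (\<sigma>, idp 2)) ?x" by (simp add: zip_replicate2 del: replicate_Suc)
    moreover have "zip (map (\<lambda>\<sigma>. (\<sigma>, idp 2)) ?x) ?r = map (\<lambda>\<sigma>. ((\<sigma>, idp 2), idp 2)) ?x"
      by (simp add: zip_replicate2 del: replicate_Suc)
    ultimately show ?thesis by simp
  qed
  also have "\<dots> = map hom_f ?x"
    by (simp add: xs_def hom_f_P)
  finally show ?thesis by (simp add: NEf_def)
qed


definition wordV :: "nat \<Rightarrow> nat set \<Rightarrow> (bool \<times> bool) list" where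
  "wordV N V = map (\<lambda>i. if i \<in> V then LB else LA) [0..<N]"

lemma wordV_ABw: "wordV N V \<in> ABw N"
  by (auto simp: wordV_def ABw_def)

lemma cntA_wordV:
  assumes "V \<subseteq> {0..<N}"
  shows "cntA (wordV N V) = N - card V"
proof -
  have "cntA (wordV N V) = length (filter (\<lambda>i. i \<notin> V) [0..<N])"
    by (simp add: cntA_def wordV_def filter_map comp_def)
  also have "\<dots> = card ({i. i \<notin> V} \<inter> {0..<N})"
    by (simp add: distinct_length_filter)
  also have "{i. i \<notin> V} \<inter> {0..<N} = {0..<N} - V" by auto
  also have "card ({0..<N} - V) = N - card V"
    using assms by (simp add: card_Diff_subset finite_subset)
  finally show ?thesis .
qed

lemma wordV_nth: "i < N \<Longrightarrow> wordV N V ! i = (if i \<in> V then LB else LA)"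
  by (simp add: wordV_def)

lemma bij_wordV: "bij_betw (wordV N) (Pow {0..<N}) (ABw N)"
proof (rule bij_betw_imageI)
  show "inj_on (wordV N) (Pow {0..<N})"
  proof (rule inj_onI)
    fix V V' assume V: "V \<in> Pow {0..<N}" and V': "V' \<in> Pow {0..<N}" and e: "wordV N V = wordV N V'"
    have pt: "(i \<in> V) = (i \<in> V')" if i: "i < N" for i
    proof -
      have "wordV N V ! i = wordV N V' ! i" using e by simp
      then have "(if i \<in> V then LB else LA) = (if i \<in> V' then LB else LA)" using wordV_nth[OF i] by metis
      then show ?thesis by (cases "i \<in> V"; cases "i \<in> V'") simp_all
    qed
    show "V = V'"
    proof (rule set_eqI)
      fix x show "(x \<in> V) = (x \<in> V')"
      proof (cases "x < N")
        case True then show ?thesis using pt by blast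
      next
        case False then show ?thesis using V V' by auto
      qed
    qed
  qed
  show "wordV N ` Pow {0..<N} = ABw N"
  proof (intro set_eqI iffI)
    fix w assume "w \<in> wordV N ` Pow {0..<N}"
    then obtain V where "w = wordV N V" by blast
    then show "w \<in> ABw N" using wordV_ABw by simp
  next
    fix w assume w: "w \<in> ABw N"
    have lw: "length w = N" and sw: "set w \<subseteq> {LA, LB}" using w by (simp_all add: ABw_def)
    define V where "V = {i. i < N \<and> w ! i = LB}"
    have "wordV N V = w"
    proof (rule nth_equalityI)
      show "length (wordV N V) = length w" using lw by (simp add: wordV_def)
      fix i assume "i < length (wordV N V)"
      then have i: "i < N" by (simp add: wordV_def)
      have "w ! i \<in> set w" using i lw by simp
      then have "w ! i \<in> {LA, LB}" using sw by blast
      then show "wordV N V ! i = w ! i" using i unfolding wordV_nth[OF i] V_def by auto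
    qed
    moreover have "V \<in> Pow {0..<N}" by (auto simp: V_def)
    ultimately show "w \<in> wordV N ` Pow {0..<N}" by (metis image_eqI)
  qed
qed

lemma sum_ABw_wordV: "sum g (ABw N) = sum (\<lambda>V. g (wordV N V)) (Pow {0..<N})"
  using sum.reindex_bij_betw[OF bij_wordV, of g N] by simp

lemma compE_zip_Pair: "map compE (zip (map (Pair (idp 2)) (map P X)) (map P Y)) = map Q (zip X Y)"
proof (induction X arbitrary: Y)
  case Nil then show ?case by simp
next
  case (Cons a X)
  then show ?case by (cases Y) (simp_all add: Q_def)
qed

lemma degs_xs:
  assumes "A \<subseteq> {0..<i + card A}"
  shows "degs 0 A (xs s i) = map P (dec1 s (map (\<lambda>k. if k \<in> A then False else True) [0..<i + card A]))"
proof -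
  have fA: "finite A" using assms finite_subset by blast
  have "degs 0 A (dec1 s ([] @ replicate i True)) = dec1 s ([] @ map (\<lambda>k. if k \<in> A then False else True) [0..<i + card A])"
    by (rule degs_dec1[OF fA assms]) simp
  then show ?thesis by (simp add: xs_def degs_map)
qed

lemma Gterm:
  "lin (\<lambda>u. nrm (map compE u)) (EZ3 x0 (xs s i) (xs t j)) =
   Psi ` (\<Sum>A\<in>{A. A \<subseteq> {0..<i + j} \<and> card A = j}. {((s, t), wordV (i + j) A)})"
proof -
  let ?S = "{A. A \<subseteq> {0..<i + j} \<and> card A = j}"
  let ?e = "idp 2"
  have finS: "finite ?S" by (rule finite_subset[of _ "Pow {0..<i+j}"]) auto
  have "EZ3 x0 (xs s i) (xs t j) = EZ (map (Pair ?e) (xs s i)) (xs t j)"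
    by (simp add: EZ3_def EZ_x0_left[OF nondeg_xs])
  also have "\<dots> = (\<Sum>A\<in>?S. nrm (zip (map (Pair ?e) (degs 0 A (xs s i))) (degs 0 ({0..<i + j} - A) (xs t j))))"
    by (simp add: EZ_def modsum_sum[OF finS] degs_map)
  finally have e: "EZ3 x0 (xs s i) (xs t j) = \<dots>" .
  have z: "map compE (zip (map (Pair ?e) (degs 0 A (xs s i))) (degs 0 ({0..<i + j} - A) (xs t j))) = Psi ((s, t), wordV (i + j) A)"
    if A: "A \<in> ?S" for A
  proof -
    have A1: "A \<subseteq> {0..<i + card A}" and cA: "card A = j" using A by auto
    have fA: "finite A" using A by (auto intro: finite_subset)
    have cA': "card ({0..<i + j} - A) = i" using A fA by (simp add: card_Diff_subset)
    have A2: "{0..<i + j} - A \<subseteq> {0..<j + card ({0..<i + j} - A)}" using cA' by auto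
    have d1: "degs 0 A (xs s i) = map P (dec1 s (map (\<lambda>k. if k \<in> A then False else True) [0..<i + j]))"
      using degs_xs[OF A1] cA by simp
    have d2: "degs 0 ({0..<i + j} - A) (xs t j) = map P (dec1 t (map (\<lambda>k. if k \<in> {0..<i + j} - A then False else True) [0..<i + j]))"
      using degs_xs[OF A2] cA' by (simp add: add.commute)
    let ?X = "map (\<lambda>k. if k \<in> A then False else True) [0..<i + j]"
    let ?Y = "map (\<lambda>k. if k \<in> {0..<i + j} - A then False else True) [0..<i + j]"
    have w: "zip ?X ?Y = wordV (i + j) A"
      by (rule nth_equalityI) (auto simp: wordV_def)
    have zd: "zip (dec1 s ?X) (dec1 t ?Y) = decp (s, t) (zip ?X ?Y)" by (rule zip_dec1) simp
    show ?thesis unfolding d1 d2 compE_zip_Pair Psi_def zd w by simp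
  qed
  have "lin (\<lambda>u. nrm (map compE u)) (EZ3 x0 (xs s i) (xs t j)) = (\<Sum>A\<in>?S. nrm (Psi ((s, t), wordV (i + j) A)))"
    unfolding e
  proof -
    have "lin (\<lambda>u. nrm (map compE u)) (\<Sum>A\<in>?S. nrm (zip (map (Pair ?e) (degs 0 A (xs s i))) (degs 0 ({0..<i + j} - A) (xs t j))))
      = (\<Sum>A\<in>?S. lin (\<lambda>u. nrm (map compE u)) (nrm (zip (map (Pair ?e) (degs 0 A (xs s i))) (degs 0 ({0..<i + j} - A) (xs t j)))))"
      by (rule lin_sumset[OF finS]) (simp add: nrm_def)
    also have "\<dots> = (\<Sum>A\<in>?S. nrm (Psi ((s, t), wordV (i + j) A)))"
      by (rule sum.cong[OF refl]) (simp only: lin_nrm_map z)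
    finally show "lin (\<lambda>u. nrm (map compE u)) (\<Sum>A\<in>?S. nrm (zip (map (Pair ?e) (degs 0 A (xs s i))) (degs 0 ({0..<i + j} - A) (xs t j))))
      = (\<Sum>A\<in>?S. nrm (Psi ((s, t), wordV (i + j) A)))" .
  qed
  also have "\<dots> = (\<Sum>A\<in>?S. Psi ` {((s, t), wordV (i + j) A)})"
    by (rule sum.cong[OF refl]) (simp add: nrm_Psi nrmw_def ABw_noLZ[OF wordV_ABw])
  also have "\<dots> = Psi ` (\<Sum>A\<in>?S. {((s, t), wordV (i + j) A)})"
    by (simp add: image_sum_set[OF inj_Psi])
  finally show ?thesis .
qed


lemma take_xs: "i \<le> n \<Longrightarrow> take (Suc i) (xs s n) = xs s i"
  by (simp add: xs_def take_map take_dec1)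

lemma drop_xs: "i \<le> n \<Longrightarrow> drop i (xs s n) = xs (s \<noteq> odd i) (n - i)"
  by (simp add: xs_def drop_map drop_dec1_rep)

lemma Gmap_xs:
  "Gmap (xs s n) = Psi ` (\<Sum>i\<in>{0..n}. \<Sum>A\<in>{A. A \<subseteq> {0..<n} \<and> card A = n - i}. {((s, s \<noteq> odd i), wordV n A)})"
proof -
  let ?x = "xs s n"
  have fz: "map fst (zip ?x ?x) = ?x" "map snd (zip ?x ?x) = ?x" "length (zip ?x ?x) = Suc n" by simp_all
  have AW: "AW (zip ?x ?x) = (\<Sum>i\<in>{0..n}. {(xs s i, xs (s \<noteq> odd i) (n - i))})"
  proof -
    have "AW (zip ?x ?x) = modsum {0..n} (\<lambda>i. nrm2 (faces [i + 1..<n + 1] ?x) (faces [0..<i] ?x))"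
      by (simp only: AW_def fz Let_def diff_Suc_1)
    also have "\<dots> = (\<Sum>i\<in>{0..n}. nrm2 (faces [i + 1..<n + 1] ?x) (faces [0..<i] ?x))"
      by (simp add: modsum_sum)
    also have "\<dots> = (\<Sum>i\<in>{0..n}. {(xs s i, xs (s \<noteq> odd i) (n - i))})"
    proof (rule sum.cong[OF refl])
      fix i assume "i \<in> {0..n}"
      then have i: "i \<le> n" by simp
      have f1: "faces [i + 1..<n + 1] ?x = xs s i"
        using faces_upt[of "i + 1" "n + 1" ?x] i by (simp add: take_xs)
      have f2: "faces [0..<i] ?x = xs (s \<noteq> odd i) (n - i)"
        using faces_upt[of 0 i ?x] i by (simp add: drop_xs)
      show "nrm2 (faces [i + 1..<n + 1] ?x) (faces [0..<i] ?x) = {(xs s i, xs (s \<noteq> odd i) (n - i))}"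
        unfolding f1 f2 by (simp add: nrm2_def nondeg_xs)
    qed
    finally show ?thesis .
  qed
  have "Gmap ?x = (\<Sum>i\<in>{0..n}. lin (\<lambda>u. nrm (map compE u)) (EZ3 x0 (xs s i) (xs (s \<noteq> odd i) (n - i))))"
    unfolding Gmap_def AW by (subst lin_sumset) auto
  also have "\<dots> = (\<Sum>i\<in>{0..n}. Psi ` (\<Sum>A\<in>{A. A \<subseteq> {0..<n} \<and> card A = n - i}. {((s, s \<noteq> odd i), wordV n A)}))"
  proof (rule sum.cong[OF refl])
    fix i assume "i \<in> {0..n}"
    then have e: "i + (n - i) = n" by simp
    show "lin (\<lambda>u. nrm (map compE u)) (EZ3 x0 (xs s i) (xs (s \<noteq> odd i) (n - i))) =
      Psi ` (\<Sum>A\<in>{A. A \<subseteq> {0..<n} \<and> card A = n - i}. {((s, s \<noteq> odd i), wordV n A)})"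
      using Gterm[of s i "s \<noteq> odd i" "n - i"] unfolding e .
  qed
  also have "\<dots> = Psi ` (\<Sum>i\<in>{0..n}. \<Sum>A\<in>{A. A \<subseteq> {0..<n} \<and> card A = n - i}. {((s, s \<noteq> odd i), wordV n A)})"
    by (simp add: image_sum_set[OF inj_Psi])
  finally show ?thesis .
qed

lemma Gindex:
  "(\<Sum>i\<in>{0..n}. \<Sum>A\<in>{A. A \<subseteq> {0..<n} \<and> card A = n - i}. {((s, s \<noteq> odd i), wordV n A)})
   = (\<Sum>w\<in>Wodd n. {(xorp (s, s) LB, w)}) + (\<Sum>w\<in>Wev n. {((s, s), w)})"
proof -
  let ?S = "Sigma {0..n} (\<lambda>i. {A. A \<subseteq> {0..<n} \<and> card A = n - i})"
  let ?g = "\<lambda>(i, A). {((s, s \<noteq> odd i), wordV n A)}"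
  have fin: "finite {A. A \<subseteq> {0..<n} \<and> card A = n - i}" for i
    by (rule finite_subset[of _ "Pow {0..<n}"]) auto
  have "(\<Sum>i\<in>{0..n}. \<Sum>A\<in>{A. A \<subseteq> {0..<n} \<and> card A = n - i}. {((s, s \<noteq> odd i), wordV n A)}) = sum ?g ?S"
    by (rule sum.Sigma) (auto simp: fin)
  also have "\<dots> = sum (\<lambda>A. ?g (n - card A, A)) (Pow {0..<n})"
  proof -
    have cle: "A \<subseteq> {0..<n} \<Longrightarrow> card A \<le> n" for A
      using card_mono[of "{0..<n}" A] by simp
    have "bij_betw (\<lambda>A. (n - card A, A)) (Pow {0..<n}) ?S"
    proof (rule bij_betw_byWitness[where f'=snd])
      show "\<forall>a\<in>Pow {0..<n}. snd (n - card a, a) = a" by simp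
      show "\<forall>a'\<in>?S. (n - card (snd a'), snd a') = a'" by auto
      show "(\<lambda>A. (n - card A, A)) ` Pow {0..<n} \<subseteq> ?S" using cle by auto
      show "snd ` ?S \<subseteq> Pow {0..<n}" by auto
    qed
    from sum.reindex_bij_betw[OF this, of ?g] show ?thesis by simp
  qed
  also have "\<dots> = sum (\<lambda>w. {((s, s \<noteq> odd (cntA w)), w)}) (ABw n)"
    unfolding sum_ABw_wordV by (rule sum.cong[OF refl]) (simp add: cntA_wordV)
  also have "ABw n = Wodd n \<union> Wev n" by (auto simp: Wodd_def Wev_def)
  also have "sum (\<lambda>w. {((s, s \<noteq> odd (cntA w)), w)}) (Wodd n \<union> Wev n)
     = sum (\<lambda>w. {((s, s \<noteq> odd (cntA w)), w)}) (Wodd n) + sum (\<lambda>w. {((s, s \<noteq> odd (cntA w)), w)}) (Wev n)"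
    by (rule sum.union_disjoint) (auto simp: Wodd_def Wev_def)
  also have "sum (\<lambda>w. {((s, s \<noteq> odd (cntA w)), w)}) (Wodd n) = (\<Sum>w\<in>Wodd n. {(xorp (s, s) LB, w)})"
    by (rule sum.cong[OF refl]) (simp add: Wodd_def xorp_def)
  also have "sum (\<lambda>w. {((s, s \<noteq> odd (cntA w)), w)}) (Wev n) = (\<Sum>w\<in>Wev n. {((s, s), w)})"
    by (rule sum.cong[OF refl]) (simp add: Wev_def)
  finally show ?thesis .
qed


lemma flag_even:
  "((s \<noteq> odd m') \<noteq> (s \<noteq> odd (Suc m' + q))) = even q"
  by (cases s) auto

lemma SHI_term:
  assumes "p < n" "q < n - p" "V \<subseteq> {0..p + q}" "card V = p"
  shows "zip (degs (n - p - q) V (sdeg (n - p - q - 1) (faces [n - p + 1..<n + 1] (xs s n))))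
             (degs (n - p - q) ({0..p + q} - V) (faces [n - p - q..<n - p] (xs s n)))
       = map (\<lambda>(a, b). (P a, P b)) (decp (s, s) (replicate (n - p - q - 1) LC @ (False, even q) # wordV (p + q + 1) V))"
proof -
  define m' where "m' = n - p - q - 1"
  have nm: "n - p - q = Suc m'" "n - p = Suc m' + q" "n = Suc m' + q + p" using assms(1,2) by (simp_all add: m'_def)
  have fV: "finite V" using assms(3) finite_subset by blast
  let ?W = "{0..p + q} - V"
  have cW: "card ?W = Suc q" using assms(3,4) fV by (simp add: card_Diff_subset)
  have fx: "faces [n - p + 1..<n + 1] (xs s n) = xs s (Suc m' + q)"
    using faces_upt[of "n - p + 1" "n + 1" "xs s n"] nm by (simp add: take_xs)
  have sx: "sdeg m' (xs s (Suc m' + q)) = map P (dec1 s (replicate m' True @ False # replicate (Suc q) True))"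
  proof -
    have "sdeg m' (dec1 s (replicate (Suc m' + q) True)) = dec1 s (take m' (replicate (Suc m' + q) True) @ False # drop m' (replicate (Suc m' + q) True))"
      by (rule dec1_sdeg) simp
    also have "\<dots> = dec1 s (replicate m' True @ False # replicate (Suc q) True)"
      by (simp del: replicate_Suc)
    finally show ?thesis by (simp only: xs_def sdeg_map)
  qed
  have dx: "degs (Suc m') V (map P (dec1 s (replicate m' True @ False # replicate (Suc q) True)))
      = map P (dec1 s (replicate m' True @ False # map (\<lambda>i. if i \<in> V then False else True) [0..<Suc q + card V]))"
  proof -
    have "V \<subseteq> {0..<Suc q + card V}" using assms(3,4) by auto
    from degs_dec1[OF fV this, of "replicate m' True @ [False]" "Suc m'" s True]
    show ?thesis by (simp add: degs_map del: replicate_Suc)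
  qed
  have fy: "faces [Suc m'..<n - p] (xs s n) = map P (dec1 s (replicate m' True @ even q # replicate p True))"
  proof -
    have "faces [Suc m'..<n - p] (xs s n) = take (Suc m') (xs s n) @ drop (Suc m' + q) (xs s n)"
      using faces_upt[of "Suc m'" "n - p" "xs s n"] nm by simp
    also have "\<dots> = xs s m' @ xs (s \<noteq> odd (Suc m' + q)) p"
      using nm by (simp add: take_xs drop_xs)
    also have "\<dots> = map P (dec1 s (replicate m' True) @ dec1 (s \<noteq> odd (Suc m' + q)) (replicate p True))"
      by (simp add: xs_def)
    also have "\<dots> = map P (dec1 s (replicate m' True @ even q # replicate p True))"
      by (simp only: dec1_rep_append flag_even)
    finally show ?thesis .
  qed
  have dy: "degs (Suc m') ?W (map P (dec1 s (replicate m' True @ even q # replicate p True)))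
      = map P (dec1 s (replicate m' True @ even q # map (\<lambda>i. if i \<in> ?W then False else True) [0..<p + card ?W]))"
  proof -
    have "?W \<subseteq> {0..<p + card ?W}" using cW by auto
    from degs_dec1[OF _ this, of "replicate m' True @ [even q]" "Suc m'" s True]
    show ?thesis by (simp add: degs_map del: replicate_Suc)
  qed
  let ?X = "(replicate m' True @ [False]) @ map (\<lambda>i. if i \<in> V then False else True) [0..<Suc q + card V]"
  let ?Y = "(replicate m' True @ [even q]) @ map (\<lambda>i. if i \<in> ?W then False else True) [0..<p + card ?W]"
  have zXY: "zip ?X ?Y = replicate m' LC @ (False, even q) # wordV (p + q + 1) V"
  proof -
    have "zip (map (\<lambda>i. if i \<in> V then False else True) [0..<Suc q + card V])
              (map (\<lambda>i. if i \<in> ?W then False else True) [0..<p + card ?W]) = wordV (p + q + 1) V"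
    proof -
      have e1: "Suc q + card V = p + q + 1" using assms(4) by simp
      have e2: "p + card ?W = p + q + 1" using cW by simp
      show ?thesis unfolding e1 e2
        by (intro nth_equalityI) (auto simp: wordV_def simp del: upt_Suc)
    qed
    then show ?thesis by (simp add: zip_replicate)
  qed
  have lXY: "length ?X = length ?Y" using assms(4) cW by simp
  have "zip (degs (n - p - q) V (sdeg (n - p - q - 1) (faces [n - p + 1..<n + 1] (xs s n))))
             (degs (n - p - q) ?W (faces [n - p - q..<n - p] (xs s n)))
      = zip (map P (dec1 s ?X)) (map P (dec1 s ?Y))"
    unfolding nm(1) diff_Suc_1 fx sx dx fy dy by (simp only: append_assoc append_Cons append_Nil)
  also have "\<dots> = map (\<lambda>(a, b). (P a, P b)) (zip (dec1 s ?X) (dec1 s ?Y))"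
    by (simp add: zip_map_map)
  also have "zip (dec1 s ?X) (dec1 s ?Y) = decp (s, s) (zip ?X ?Y)"
    by (rule zip_dec1[OF lXY])
  also note zXY
  finally show ?thesis unfolding m'_def .
qed


definition In :: "nat \<Rightarrow> (nat \<times> nat \<times> nat set) set" where
  "In n = {(p, q, V). p < n \<and> q < n - p \<and> V \<subseteq> {0..p + q} \<and> card V = p}"

lemma finite_In: "finite (In n)"
proof (rule finite_subset)
  show "In n \<subseteq> {..<n} \<times> {..<n} \<times> Pow {0..n}" by (auto simp: In_def)
qed auto

definition shw :: "bool \<Rightarrow> nat \<Rightarrow> nat \<times> nat \<times> nat set \<Rightarrow> (bool \<times> bool) list" where
  "shw s n t = (case t of (p, q, V) \<Rightarrow> replicate (n - p - q - 1) LC @ (False, even q) # wordV (p + q + 1) V)"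

lemma inj_PP: "inj (\<lambda>(a, b). (P a, P b))"
  using inj_P by (auto simp: inj_def)

lemma H2_xs: "H2 (xs s n) = Psi ` (\<Sum>t\<in>In n. nrmw ((s, s), shw s n t))"
proof -
  let ?x = "xs s n"
  let ?PP = "\<lambda>(a, b). (P a, P b)"
  let ?T = "\<lambda>t. map ?PP ` nrm (decp (s, s) (shw s n t))"
  have fz: "map fst (zip ?x ?x) = ?x" "map snd (zip ?x ?x) = ?x" "length (zip ?x ?x) - 1 = n" by simp_all
  have SHI: "SHI (zip ?x ?x) = (\<Sum>t\<in>In n. ?T t)"
  proof (cases "n = 0")
    case True
    then have "In n = {}" by (auto simp: In_def)
    then show ?thesis using True by (simp add: SHI_def)
  next
    case False
    have "SHI (zip ?x ?x) = modsum (In n) (\<lambda>(p, q, V). let m = n - p - q in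
          nrm (zip (degs m V (sdeg (m - 1) (faces [n - p + 1..<n + 1] ?x)))
                   (degs m ({0..p + q} - V) (faces [n - p - q..<n - p] ?x))))"
      using False unfolding SHI_def fz Let_def In_def by simp
    also have "\<dots> = (\<Sum>t\<in>In n. ?T t)"
      unfolding modsum_sum[OF finite_In]
    proof (rule sum.cong[OF refl])
      fix t assume t: "t \<in> In n"
      obtain p q V where tt: "t = (p, q, V)" by (cases t) auto
      have c: "p < n" "q < n - p" "V \<subseteq> {0..p + q}" "card V = p" using t tt by (auto simp: In_def)
      show "(\<lambda>(p, q, V). let m = n - p - q in
          nrm (zip (degs m V (sdeg (m - 1) (faces [n - p + 1..<n + 1] ?x)))
                   (degs m ({0..p + q} - V) (faces [n - p - q..<n - p] ?x)))) t = ?T t"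
        unfolding tt Let_def split SHI_term[OF c] shw_def nrm_map[OF inj_PP] by simp
    qed
    finally show ?thesis .
  qed
  have lT: "lin (\<lambda>u. nrm (map (\<lambda>(a, b). compE ((idp 2, a), b)) u)) (?T t) = Psi ` nrmw ((s, s), shw s n t)" for t
  proof -
    have "?T t = nrm (map ?PP (decp (s, s) (shw s n t)))" by (simp add: nrm_map[OF inj_PP])
    then have "lin (\<lambda>u. nrm (map (\<lambda>(a, b). compE ((idp 2, a), b)) u)) (?T t)
       = nrm (map (\<lambda>(a, b). compE ((idp 2, a), b)) (map ?PP (decp (s, s) (shw s n t))))"
      by (simp only: lin_nrm_map)
    also have "map (\<lambda>(a, b). compE ((idp 2, a), b)) (map ?PP (decp (s, s) (shw s n t))) = Psi ((s, s), shw s n t)"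
      by (simp add: Psi_def Q_def case_prod_beta)
    finally show ?thesis by (simp add: nrm_Psi)
  qed
  have "H2 ?x = (\<Sum>t\<in>In n. lin (\<lambda>u. nrm (map (\<lambda>(a, b). compE ((idp 2, a), b)) u)) (?T t))"
    unfolding H2_def SHI by (rule lin_sumset[OF finite_In]) (simp add: nrm_def)
  also have "\<dots> = (\<Sum>t\<in>In n. Psi ` nrmw ((s, s), shw s n t))" by (simp only: lT)
  also have "\<dots> = Psi ` (\<Sum>t\<in>In n. nrmw ((s, s), shw s n t))" by (simp add: image_sum_set[OF inj_Psi])
  finally show ?thesis .
qed


lemma nrmw_shape:
  "nrmw (st, replicate k LC @ (False, e) # wordV N V) = (if e then {(st, y k (wordV N V))} else {})"
proof -
  have "LZ \<notin> set (wordV N V)" by (rule ABw_noLZ[OF wordV_ABw])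
  then show ?thesis by (auto simp: nrmw_def y_def)
qed

lemma SHI_inner:
  assumes "0 < N"
  shows "(\<Sum>V\<in>{V. V \<subseteq> {0..<N} \<and> card V < N}. nrmw (st, replicate k LC @ (False, even (N - 1 - card V)) # wordV N V))
       = (\<Sum>w\<in>Wodd N. {(st, y k w)})"
proof -
  have "(\<Sum>V\<in>{V. V \<subseteq> {0..<N} \<and> card V < N}. nrmw (st, replicate k LC @ (False, even (N - 1 - card V)) # wordV N V))
      = (\<Sum>V\<in>Pow {0..<N}. (if odd (cntA (wordV N V)) then {(st, y k (wordV N V))} else {}))"
  proof (rule sum.mono_neutral_cong_left)
    show "finite (Pow {0..<N})" by simp
    show "{V. V \<subseteq> {0..<N} \<and> card V < N} \<subseteq> Pow {0..<N}" by auto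
    show "\<forall>i\<in>Pow {0..<N} - {V. V \<subseteq> {0..<N} \<and> card V < N}. (if odd (cntA (wordV N i)) then {(st, y k (wordV N i))} else {}) = 0"
    proof
      fix V assume "V \<in> Pow {0..<N} - {V. V \<subseteq> {0..<N} \<and> card V < N}"
      then have V: "V \<subseteq> {0..<N}" "\<not> card V < N" by auto
      have "card V \<le> N" using card_mono[OF _ V(1)] by simp
      then have "card V = N" using V(2) by simp
      then have "cntA (wordV N V) = 0" using cntA_wordV[OF V(1)] by simp
      then show "(if odd (cntA (wordV N V)) then {(st, y k (wordV N V))} else {}) = 0" by simp
    qed
    show "nrmw (st, replicate k LC @ (False, even (N - 1 - card V)) # wordV N V) =
          (if odd (cntA (wordV N V)) then {(st, y k (wordV N V))} else {})"
      if "V \<in> {V. V \<subseteq> {0..<N} \<and> card V < N}" for V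
    proof -
      from that have V: "V \<subseteq> {0..<N}" "card V < N" by auto
      have "even (N - 1 - card V) = odd (cntA (wordV N V))"
        using cntA_wordV[OF V(1)] V(2) by (simp add: Suc_diff_Suc[symmetric])
      then show ?thesis by (simp add: nrmw_shape)
    qed
  qed
  also have "\<dots> = (\<Sum>w\<in>ABw N. (if odd (cntA w) then {(st, y k w)} else {}))"
    by (simp add: sum_ABw_wordV)
  also have "\<dots> = (\<Sum>w\<in>Wodd N. {(st, y k w)})"
    unfolding Wodd_def
    by (subst sum.inter_filter, simp, rule sum.cong[OF refl], simp only: set_zero_empty)
  finally show ?thesis .
qed

lemma SHI_index: "(\<Sum>t\<in>In n. nrmw (st, shw s n t)) = SH n st"
proof -
  define J where "J = Sigma {..<n} (\<lambda>k. {V. V \<subseteq> {0..<n - k} \<and> card V < n - k})"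
  let ?h = "\<lambda>(k, V). (card V, n - k - 1 - card V, V)"
  let ?h' = "\<lambda>(p, q, V). (n - p - q - 1, V::nat set)"
  have bij: "bij_betw ?h J (In n)"
  proof (rule bij_betw_byWitness[where f'="?h'"])
    show "\<forall>a\<in>J. ?h' (?h a) = a" by (auto simp: J_def)
    show "\<forall>a'\<in>In n. ?h (?h' a') = a'" by (auto simp: In_def)
    show "?h ` J \<subseteq> In n"
    proof
      fix t assume "t \<in> ?h ` J"
      then obtain k V where kV: "k < n" "V \<subseteq> {0..<n - k}" "card V < n - k" "t = ?h (k, V)"
        by (auto simp: J_def)
      have "{0..card V + (n - k - 1 - card V)} = {0..<n - k}" using kV by auto
      then show "t \<in> In n" using kV by (auto simp: In_def)
    qed
    show "?h' ` In n \<subseteq> J"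
    proof
      fix t assume "t \<in> ?h' ` In n"
      then obtain p q V where c: "p < n" "q < n - p" "V \<subseteq> {0..p + q}" "card V = p" "t = ?h' (p, q, V)"
        by (auto simp: In_def)
      have "{0..p + q} = {0..<n - (n - p - q - 1)}" using c by auto
      then show "t \<in> J" using c by (auto simp: J_def)
    qed
  qed
  have "(\<Sum>t\<in>In n. nrmw (st, shw s n t)) = (\<Sum>t\<in>J. nrmw (st, shw s n (?h t)))"
    using sum.reindex_bij_betw[OF bij, of "\<lambda>t. nrmw (st, shw s n t)"] by simp
  also have "\<dots> = (\<Sum>(k, V)\<in>J. nrmw (st, shw s n (?h (k, V))))"
    by (simp add: case_prod_unfold)
  also have "\<dots> = (\<Sum>k<n. \<Sum>V\<in>{V. V \<subseteq> {0..<n - k} \<and> card V < n - k}. nrmw (st, shw s n (?h (k, V))))"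
    unfolding J_def by (rule sum.Sigma[symmetric]) auto
  also have "\<dots> = (\<Sum>k<n. \<Sum>w\<in>Wodd (n - k). {(st, y k w)})"
  proof (rule sum.cong[OF refl])
    fix k assume k: "k \<in> {..<n}"
    have "(\<Sum>V\<in>{V. V \<subseteq> {0..<n - k} \<and> card V < n - k}. nrmw (st, shw s n (?h (k, V))))
        = (\<Sum>V\<in>{V. V \<subseteq> {0..<n - k} \<and> card V < n - k}. nrmw (st, replicate k LC @ (False, even (n - k - 1 - card V)) # wordV (n - k) V))"
    proof (rule sum.cong[OF refl])
      fix V assume "V \<in> {V. V \<subseteq> {0..<n - k} \<and> card V < n - k}"
      then have cV: "card V < n - k" by simp
      have e1: "n - card V - (n - k - 1 - card V) - 1 = k" using cV k by simp
      have e2: "card V + (n - k - 1 - card V) + 1 = n - k" using cV by simp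
      show "nrmw (st, shw s n (?h (k, V))) = nrmw (st, replicate k LC @ (False, even (n - k - 1 - card V)) # wordV (n - k) V)"
        by (simp only: shw_def split e1 e2)
    qed
    also have "\<dots> = (\<Sum>w\<in>Wodd (n - k). {(st, y k w)})"
      using SHI_inner[of "n - k" st k] k by simp
    finally show "(\<Sum>V\<in>{V. V \<subseteq> {0..<n - k} \<and> card V < n - k}. nrmw (st, shw s n (?h (k, V)))) = (\<Sum>w\<in>Wodd (n - k). {(st, y k w)})" .
  qed
  finally show ?thesis by (simp add: SH_def)
qed


lemma finite_nrmw[simp]: "finite (nrmw z)" by (simp add: nrmw_def)
lemma finite_nrm[simp]: "finite (nrm z)" by (simp add: nrm_def)

lemma finite_bd: "finite (bd x)"
  by (auto simp: bd_def modsum_sum intro!: finite_sum_sets)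

lemma H2_xs_SH: "H2 (xs s n) = Psi ` SH n (s, s)"
  using H2_xs[of s n] SHI_index[where n=n and st="(s, s)" and s=s] by simp

lemma finite_SH: "finite (SH n st)"
  unfolding SH_def by (intro finite_sum_sets) auto

lemma finite_H2_xs: "finite (H2 (xs s n))"
  using finite_SH by (simp add: H2_xs_SH)

lemma lin_wbd_SH: "lin wbd (SH n st) = (\<Sum>k<n. \<Sum>w\<in>Wodd (n - k). wbd (st, y k w))"
proof -
  have "lin wbd (SH n st) = (\<Sum>k<n. lin wbd (\<Sum>w\<in>Wodd (n - k). {(st, y k w)}))"
    unfolding SH_def by (rule lin_sumset) (auto intro: finite_sum_sets)
  also have "\<dots> = (\<Sum>k<n. \<Sum>w\<in>Wodd (n - k). wbd (st, y k w))"
    by (rule sum.cong[OF refl]) (simp add: lin_sumset)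
  finally show ?thesis .
qed

lemma per_simplex:
  "lin bd (H2 (xs s n)) + lin H2 (bd (xs s n)) = NEg (xs s n) + Gmap (xs s n)"
proof (cases n)
  case 0
  have h: "H2 (xs s n) = {}" using 0 by (simp add: H2_xs_SH SH_def)
  have b: "bd (xs s n) = {}" using 0 by (simp add: bd_def)
  have g: "Gmap (xs s n) = Psi ` {((s, s), [])}"
    unfolding Gmap_xs Gindex using 0 by simp
  have e: "NEg (xs s n) = Psi ` {((s, s), [])}" using 0 by (simp add: NEg_xs)
  show ?thesis by (simp add: h b g e)
next
  case (Suc n')
  let ?st = "(s, s)"
  have xc: "xorp ?st LC = (\<not> s, \<not> s)" by (simp add: xorp_def)
  have A: "lin bd (H2 (xs s n)) = Psi ` (\<Sum>k<n. \<Sum>w\<in>Wodd (n - k). wbd (?st, y k w))"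
    by (simp add: H2_xs_SH lin_bd_Psi finite_SH lin_wbd_SH)
  have B: "lin H2 (bd (xs s n)) = Psi ` SH n' (xorp ?st LC) + Psi ` SH n' ?st"
    unfolding Suc bd_xs by (simp add: lin_add H2_xs_SH xc)
  have C: "NEg (xs s n) + Gmap (xs s n) = Psi ` ({(?st, replicate n LC)} + ((\<Sum>w\<in>Wodd n. {(xorp ?st LB, w)}) + (\<Sum>w\<in>Wev n. {(?st, w)})))"
    unfolding NEg_xs Gmap_xs Gindex by (simp add: image_plus_set[OF inj_Psi])
  have W: "(\<Sum>k<n. \<Sum>w\<in>Wodd (n - k). wbd (?st, y k w)) + SH n' (xorp ?st LC) + SH n' ?st
       = {(?st, replicate n LC)} + (\<Sum>w\<in>Wodd n. {(xorp ?st LB, w)}) + (\<Sum>w\<in>Wev n. {(?st, w)})"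
    unfolding Suc by (rule word_identity)
  have "lin bd (H2 (xs s n)) + lin H2 (bd (xs s n))
     = Psi ` ((\<Sum>k<n. \<Sum>w\<in>Wodd (n - k). wbd (?st, y k w)) + SH n' (xorp ?st LC) + SH n' ?st)"
    unfolding A B by (simp add: image_plus_set[OF inj_Psi] add.assoc)
  also have "\<dots> = NEg (xs s n) + Gmap (xs s n)"
    unfolding W C by (simp add: add.assoc)
  finally show ?thesis .
qed

theorem mainTheorem6:
  assumes "finite c" and "c \<subseteq> NE 2"
  shows "lin NEf c = lin Fmap c \<and>
         cadd (lin bd (lin H2 c)) (lin H2 (lin bd c)) = cadd (lin NEg c) (lin Gmap c)"
proof -
  have shape: "\<exists>s n. x = xs s n" if "x \<in> c" for x
    using NE2_shape[of x] that assms(2) by (auto simp: xs_def)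
  have 1: "lin NEf c = lin Fmap c"
    unfolding lin_sum[OF assms(1)]
  proof (rule sum.cong[OF refl])
    fix x assume "x \<in> c"
    then obtain s n where "x = xs s n" using shape by blast
    then show "NEf x = Fmap x" by (simp add: NEf_Fmap_xs)
  qed
  have fH: "finite (H2 x)" if "x \<in> c" for x
    using shape[OF that] finite_H2_xs by blast
  have "cadd (lin bd (lin H2 c)) (lin H2 (lin bd c))
      = (\<Sum>x\<in>c. lin bd (H2 x)) + (\<Sum>x\<in>c. lin H2 (bd x))"
    unfolding cadd_plus by (simp add: lin_comp[OF assms(1)] fH finite_bd)
  also have "\<dots> = (\<Sum>x\<in>c. lin bd (H2 x) + lin H2 (bd x))"
    by (simp add: sum.distrib)
  also have "\<dots> = (\<Sum>x\<in>c. NEg x + Gmap x)"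
  proof (rule sum.cong[OF refl])
    fix x assume "x \<in> c"
    then obtain s n where "x = xs s n" using shape by blast
    then show "lin bd (H2 x) + lin H2 (bd x) = NEg x + Gmap x" by (simp add: per_simplex)
  qed
  also have "\<dots> = cadd (lin NEg c) (lin Gmap c)"
    unfolding cadd_plus by (simp add: lin_sum[OF assms(1)] sum.distrib)
  finally show ?thesis using 1 by simp
qed


end
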